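(* Assume the standing setting below. Let $\alpha\in(0,1/6]$ and $\gamma\in[\alpha,1-2\alpha]$ with $\alpha n,\gamma n$ integers. Let $x_1,\ldots,x_n$ be a uniformly random ordering of $X$; let $P_1$ be the first $\alpha n$ points, $P_2$ the next $\alpha n$ points, and $P_3$ the next $\gamma n$ points. Let $T_\alpha=\{c_1,\ldots,c_m\}$, $m\le k_+$, be a nonempty set of points that is a deterministic function of the set $P_1$, and let $C_i:=\{x\in X: i=\arg\min_{j\in[m]}\rho(c_j,x)\}$. Let $\mathcal{B}_a$ be a fixed $(\phi_\alpha/15)$-linear bin division of $X$ with respect to $\mathrm{OPT}$. Let $F_b:=\mathrm{far}_{k\phi_\alpha}(X\setminus P_1,T_\alpha)$, $F_c:=\mathrm{far}_{4(k+1)\phi_\alpha}(X\setminus P_1,T_\alpha)$, $F_d:=\mathrm{far}_{5(k+1)\phi_\alpha}(X\setminus P_1,T_\alpha)$, and let $\mathcal{B}_b$ (resp. $\mathcal{B}_c$) be a $(\phi_\alpha/3)$-linear bin division of $(X\setminus P_1)\setminus F_b$ (resp. $(X\setminus P_1)\setminus F_c$) with respect to $T_\alpha$, chosen as a deterministic function of $(P_1,T_\alpha)$. Let $E$ be the event that all of the following hold: (1) for each $i$ with $|C_i^*|\ge\phi_\alpha$, $C_i^*$ is well-represented in $P_1$ for $X$ and in $P_1\cup P_2$ for $X$; (2) each of $F_b,F_c$ is trivial or well-represented in $P_2$ for $X\setminus P_1$, and $F_d$ is trivial or well-represented in $P_3$ for $X\setminus P_1$; (3) $\mathcal{B}_a$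 is trivial or well-represented in $P_1$ for $X$, and each of $\mathcal{B}_b,\mathcal{B}_c$ is trivial or well-represented in $P_2$ for $X\setminus P_1$; (4) for each $i\in[m]$, among the first $\lceil\log_2(8k_+/\delta)\rceil$ points of $C_i\cap P_3$ in the order of the stream (or all of them, if there are fewer), there is a point $x^*$ with $\rho(c_i,x^* )\le\rho(c_i,x)$ for at least half of the points $x\in C_i\cap P_3$. Then $\Pr[E]\ge1-\delta/2$.
   Context: Standing setting: $(X,\rho)$ is a finite metric space with $|X|=n$; $k\ge2$ is an integer and $\delta\in(0,1)$; $\log$ is the natural logarithm; $k_+:=k+38\log(32k/\delta)$; for $\alpha>0$, $\phi_\alpha:=150\log(32k/\delta)/\alpha$. For nonempty $T\subseteq X$, $\rho(x,T):=\min_{y\in T}\rho(x,y)$ and $R(S,T):=\sum_{x\in S}\rho(x,T)$; ties are broken by a fixed ordering of $X$. $\mathrm{OPT}=\{c_1^*,\ldots,c_k^*\}$ is a set of at most $k$ points of $X$ minimizing $R(X,\cdot)$, and $C_i^*:=\{x\in X:i=\arg\min_{j\in[k]}\rho(c_j^*,x)\}$. For $S\subseteq X$ and real $r\ge0$, $\mathrm{far}_r(S,T)$ is the set of the $\lceil r\rceil$ points of $S$ furthest from $T$; if $|S|<r$, $\mathrm{far}_r(S,T):=S$ (trivial far set). For finite $W$, $A,B\subseteq W$, $B$ is well-represented in $A$ for $W$ if $|B\cap A|/|B|\in[r/2,\frac32 r]$ with $r=|A|/|W|$; a bin division is well-represented if all its bins are. A $z$-linear bin division ($z>0$) of $W$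 with respect to $T$ is a partition $(\mathcal{B}(1),\ldots,\mathcal{B}(L))$ of $W$ with: (1) if $z\le|W|$, $|\mathcal{B}(i)|\ge z(i+1)/2$ for all $i$; otherwise it is trivial, $\mathcal{B}(1):=W$; (2) $|\mathcal{B}(1)|\le\frac52 z$; (3) $|\mathcal{B}(i+1)|/|\mathcal{B}(i)|\le3/2$; (4) $\rho(x,T)\ge\rho(x',T)$ whenever $x\in\mathcal{B}(i)$, $x'\in\mathcal{B}(i+1)$. *)

theory Defs
  imports "HOL-Probability.Probability" "HOL-Combinatorics.Multiset_Permutations"
begin

text \<open>The fixed ordering of X used for tie-breaking is the linear order of the element type.\<close>

definition metric_on :: "'a set \<Rightarrow> ('a \<Rightarrow> 'a \<Rightarrow> real) \<Rightarrow> bool" where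
  "metric_on X \<rho> \<longleftrightarrow>
     (\<forall>x\<in>X. \<forall>y\<in>X. \<rho> x y \<ge> 0 \<and> \<rho> x y = \<rho> y x \<and> (\<rho> x y = 0 \<longleftrightarrow> x = y)) \<and>
     (\<forall>x\<in>X. \<forall>y\<in>X. \<forall>z\<in>X. \<rho> x z \<le> \<rho> x y + \<rho> y z)"

definition dist_set :: "('a \<Rightarrow> 'a \<Rightarrow> real) \<Rightarrow> 'a \<Rightarrow> 'a set \<Rightarrow> real" where
  "dist_set \<rho> x T = Min ((\<rho> x) ` T)"

definition cost :: "('a \<Rightarrow> 'a \<Rightarrow> real) \<Rightarrow> 'a set \<Rightarrow> 'a set \<Rightarrow> real" where
  "cost \<rho> S T = (\<Sum>x\<in>S. dist_set \<rho> x T)"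

text \<open>Cluster of the i-th centre (0-indexed) of a list of distinct centres cs:
  points of X whose nearest centre is cs!i; ties between centres broken by the
  fixed ordering of X.\<close>
definition cluster :: "('a::linorder \<Rightarrow> 'a \<Rightarrow> real) \<Rightarrow> 'a set \<Rightarrow> 'a list \<Rightarrow> nat \<Rightarrow> 'a set" where
  "cluster \<rho> X cs i = {x\<in>X. \<forall>j<length cs. j \<noteq> i \<longrightarrow>
       (\<rho> (cs!i) x < \<rho> (cs!j) x \<or> (\<rho> (cs!i) x = \<rho> (cs!j) x \<and> cs!i < cs!j))}"

text \<open>far_r(S,T): the ceil(r) points of S furthest from T (ties broken by the
  fixed ordering: among equidistant points the smaller one is preferred);
  S itself if |S| < r (trivial far set).\<close>
definition far_before :: "('a::linorder \<Rightarrow> 'a \<Rightarrow> real) \<Rightarrow> 'a set \<Rightarrow> 'a \<Rightarrow> 'a \<Rightarrow> bool" where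
  "far_before \<rho> T y x \<longleftrightarrow> dist_set \<rho> y T > dist_set \<rho> x T \<or>
       (dist_set \<rho> y T = dist_set \<rho> x T \<and> y < x)"

definition far :: "('a::linorder \<Rightarrow> 'a \<Rightarrow> real) \<Rightarrow> real \<Rightarrow> 'a set \<Rightarrow> 'a set \<Rightarrow> 'a set" where
  "far \<rho> r S T = (if real (card S) < r then S
     else {x\<in>S. card {y\<in>S. far_before \<rho> T y x} < nat \<lceil>r\<rceil>})"

definition far_trivial :: "real \<Rightarrow> 'a set \<Rightarrow> bool" where
  "far_trivial r S \<longleftrightarrow> real (card S) < r"

definition well_rep :: "'a set \<Rightarrow> 'a set \<Rightarrow> 'a set \<Rightarrow> bool" where
  "well_rep W A B \<longleftrightarrow>
     (let r = real (card A) / real (card W);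
          q = real (card (B \<inter> A)) / real (card B)
      in r / 2 \<le> q \<and> q \<le> 3 / 2 * r)"

definition bins_well_rep :: "'a set \<Rightarrow> 'a set \<Rightarrow> 'a set list \<Rightarrow> bool" where
  "bins_well_rep W A Bs \<longleftrightarrow> (\<forall>B\<in>set Bs. well_rep W A B)"

text \<open>z-linear bin division of W with respect to T, bins listed as B(1),...,B(L)
  = Bs!0,...,Bs!(L-1).\<close>
definition linear_bin_division ::
  "('a \<Rightarrow> 'a \<Rightarrow> real) \<Rightarrow> real \<Rightarrow> 'a set \<Rightarrow> 'a set \<Rightarrow> 'a set list \<Rightarrow> bool" where
  "linear_bin_division \<rho> z W T Bs \<longleftrightarrow>
     Bs \<noteq> [] \<and> \<Union>(set Bs) = W \<and>
     (\<forall>i j. i < j \<and> j < length Bs \<longrightarrow> Bs!i \<inter> Bs!j = {}) \<and>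
     (if z \<le> real (card W)
      then (\<forall>i<length Bs. real (card (Bs!i)) \<ge> z * (real i + 2) / 2)
      else Bs = [W]) \<and>
     real (card (Bs!0)) \<le> 5 / 2 * z \<and>
     (\<forall>i. i + 1 < length Bs \<longrightarrow> real (card (Bs!(i+1))) \<le> 3 / 2 * real (card (Bs!i))) \<and>
     (\<forall>i. i + 1 < length Bs \<longrightarrow>
        (\<forall>x\<in>Bs!i. \<forall>x'\<in>Bs!(i+1). dist_set \<rho> x T \<ge> dist_set \<rho> x' T))"

definition bins_trivial :: "real \<Rightarrow> 'a set \<Rightarrow> bool" where
  "bins_trivial z W \<longleftrightarrow> real (card W) < z"

definition kplus :: "nat \<Rightarrow> real \<Rightarrow> real" where
  "kplus k \<delta> = real k + 38 * ln (32 * real k / \<delta>)"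

definition phi :: "nat \<Rightarrow> real \<Rightarrow> real \<Rightarrow> real" where
  "phi k \<delta> \<alpha> = 150 * ln (32 * real k / \<delta>) / \<alpha>"

end

theory Submission
  imports Defs
begin


lemma perm_split:
  assumes W: "finite W" and s: "s \<le> card W"
  shows "card {xs \<in> permutations_of_set W. P xs} =
    (\<Sum>A\<in>{A. A \<subseteq> W \<and> card A = s}.
       card {(us,vs). us \<in> permutations_of_set A \<and> vs \<in> permutations_of_set (W - A) \<and> P (us @ vs)})"
proof -
  let ?S = "\<lambda>A. {(us,vs). us \<in> permutations_of_set A \<and> vs \<in> permutations_of_set (W - A) \<and> P (us @ vs)}"
  let ?f = "\<lambda>(us::'a list,vs). us @ vs"
  have eq: "{xs \<in> permutations_of_set W. P xs} = (\<Union>A\<in>{A. A \<subseteq> W \<and> card A = s}. ?f ` ?S A)"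
  proof (intro equalityI subsetI)
    fix xs assume "xs \<in> {xs \<in> permutations_of_set W. P xs}"
    then have xs: "set xs = W" "distinct xs" "P xs" by (auto simp: permutations_of_set_def)
    have len: "length xs = card W" using xs distinct_card by fastforce
    let ?A = "set (take s xs)"
    have cA: "card ?A = s" using xs s len by (simp add: distinct_card)
    have u: "?A \<union> set (drop s xs) = W" using xs(1) by (metis append_take_drop_id set_append)
    have d: "?A \<inter> set (drop s xs) = {}"
      using xs(2) by (metis append_take_drop_id distinct_append)
    have sd: "set (drop s xs) = W - ?A" using u d by blast
    have "(take s xs, drop s xs) \<in> ?S ?A"
      using xs sd by (auto simp: permutations_of_set_def)
    moreover have "?A \<in> {A. A \<subseteq> W \<and> card A = s}" using cA xs set_take_subset by fastforce
    moreover have "xs = ?f (take s xs, drop s xs)" by simp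
    ultimately show "xs \<in> (\<Union>A\<in>{A. A \<subseteq> W \<and> card A = s}. ?f ` ?S A)"
      by blast
  next
    fix xs assume "xs \<in> (\<Union>A\<in>{A. A \<subseteq> W \<and> card A = s}. ?f ` ?S A)"
    then obtain A p where A: "A \<subseteq> W" "p \<in> ?S A" "xs = ?f p" by blast
    obtain us vs where "p = (us,vs)" by (cases p)
    then show "xs \<in> {xs \<in> permutations_of_set W. P xs}"
      using A by (auto simp: permutations_of_set_def)
  qed
  have fin: "finite {A. A \<subseteq> W \<and> card A = s}" using W by auto
  have finS: "finite (?S A)" for A
    by (rule finite_subset[of _ "permutations_of_set A \<times> permutations_of_set (W - A)"]) auto
  have disj: "\<forall>A\<in>{A. A \<subseteq> W \<and> card A = s}. \<forall>B\<in>{A. A \<subseteq> W \<and> card A = s}. A \<noteq> B \<longrightarrow> ?f ` ?S A \<inter> ?f ` ?S B = {}"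
  proof (intro ballI impI)
    fix A B assume A: "A \<in> {A. A \<subseteq> W \<and> card A = s}" and B: "B \<in> {A. A \<subseteq> W \<and> card A = s}" and "A \<noteq> B"
    have key: "\<And>C us vs. C \<in> {A. A \<subseteq> W \<and> card A = s} \<Longrightarrow> (us,vs) \<in> ?S C \<Longrightarrow> set (take s (us @ vs)) = C"
    proof -
      fix C us vs assume C: "C \<in> {A. A \<subseteq> W \<and> card A = s}" "(us,vs) \<in> ?S C"
      then have "length us = s" using length_finite_permutations_of_set by fastforce
      then show "set (take s (us @ vs)) = C" using C by (simp add: permutations_of_set_def)
    qed
    show "?f ` ?S A \<inter> ?f ` ?S B = {}"
    proof (rule ccontr)
      assume "?f ` ?S A \<inter> ?f ` ?S B \<noteq> {}"
      then obtain p q where pq: "p \<in> ?S A" "q \<in> ?S B" "?f p = ?f q" by blast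
      obtain us vs where pp: "p = (us,vs)" by (cases p)
      obtain us' vs' where qq: "q = (us',vs')" by (cases q)
      have h1: "(us,vs) \<in> ?S A" using pq(1) pp by simp
      have h2: "(us',vs') \<in> ?S B" using pq(2) qq by simp
      have e: "us @ vs = us' @ vs'" using pq(3) pp qq by simp
      show False using key[OF A h1] key[OF B h2] e \<open>A \<noteq> B\<close> by metis
    qed
  qed
  have inj: "\<And>A. A \<in> {A. A \<subseteq> W \<and> card A = s} \<Longrightarrow> inj_on ?f (?S A)"
  proof -
    fix A assume A: "A \<in> {A. A \<subseteq> W \<and> card A = s}"
    show "inj_on ?f (?S A)"
    proof (rule inj_onI)
      fix p q assume p: "p \<in> ?S A" and q: "q \<in> ?S A" and e: "?f p = ?f q"
      obtain us vs where pp: "p = (us,vs)" by (cases p)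
      obtain us' vs' where qq: "q = (us',vs')" by (cases q)
      have "length us = s" "length us' = s" using A p q pp qq length_finite_permutations_of_set by fastforce+
      then show "p = q" using e pp qq by simp
    qed
  qed
  have "card (\<Union>A\<in>{A. A \<subseteq> W \<and> card A = s}. ?f ` ?S A) =
      (\<Sum>A\<in>{A. A \<subseteq> W \<and> card A = s}. card (?f ` ?S A))"
    using card_UN_disjoint[OF fin, of "\<lambda>A. ?f ` ?S A"] finS disj by simp
  also have "\<dots> = (\<Sum>A\<in>{A. A \<subseteq> W \<and> card A = s}. card (?S A))"
    by (rule sum.cong[OF refl]) (rule card_image[OF inj])
  finally show ?thesis unfolding eq .
qed

lemma perm_cond_drop:
  assumes W: "finite W" and s: "s \<le> card W"
  shows "card {xs \<in> permutations_of_set W. \<Phi> (set (take s xs)) (drop s xs)} =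
    fact s * (\<Sum>A\<in>{A. A \<subseteq> W \<and> card A = s}. card {vs \<in> permutations_of_set (W - A). \<Phi> A vs})"
proof -
  have "card {(us,vs). us \<in> permutations_of_set A \<and> vs \<in> permutations_of_set (W - A) \<and>
          \<Phi> (set (take s (us @ vs))) (drop s (us @ vs))} =
        fact s * card {vs \<in> permutations_of_set (W - A). \<Phi> A vs}"
    if A: "A \<in> {A. A \<subseteq> W \<and> card A = s}" for A
  proof -
    have "{(us,vs). us \<in> permutations_of_set A \<and> vs \<in> permutations_of_set (W - A) \<and>
          \<Phi> (set (take s (us @ vs))) (drop s (us @ vs))} =
          permutations_of_set A \<times> {vs \<in> permutations_of_set (W - A). \<Phi> A vs}"
    proof -
      have "\<And>us. us \<in> permutations_of_set A \<Longrightarrow> length us = s"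
        using A length_finite_permutations_of_set by fastforce
      then show ?thesis by (auto simp: permutations_of_set_def)
    qed
    moreover have "finite A" using A W finite_subset by auto
    ultimately show ?thesis using A by (simp add: card_cartesian_product)
  qed
  then show ?thesis
    by (subst perm_split[OF W s]) (simp add: sum_distrib_left)
qed

lemma perm_cond_take:
  assumes W: "finite W" and s: "s \<le> card W"
  shows "card {xs \<in> permutations_of_set W. \<Psi> (set (take s xs)) (take s xs)} =
    fact (card W - s) * (\<Sum>A\<in>{A. A \<subseteq> W \<and> card A = s}. card {us \<in> permutations_of_set A. \<Psi> A us})"
proof -
  have "card {(us,vs). us \<in> permutations_of_set A \<and> vs \<in> permutations_of_set (W - A) \<and>
          \<Psi> (set (take s (us @ vs))) (take s (us @ vs))} =
        fact (card W - s) * card {us \<in> permutations_of_set A. \<Psi> A us}"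
    if A: "A \<in> {A. A \<subseteq> W \<and> card A = s}" for A
  proof -
    have "{(us,vs). us \<in> permutations_of_set A \<and> vs \<in> permutations_of_set (W - A) \<and>
          \<Psi> (set (take s (us @ vs))) (take s (us @ vs))} =
          {us \<in> permutations_of_set A. \<Psi> A us} \<times> permutations_of_set (W - A)"
    proof -
      have "\<And>us. us \<in> permutations_of_set A \<Longrightarrow> length us = s"
        using A length_finite_permutations_of_set by fastforce
      then show ?thesis by (auto simp: permutations_of_set_def)
    qed
    moreover have "finite A" using A W finite_subset by auto
    moreover have "card (W - A) = card W - s"
      using A W finite_subset[of A W] by (simp add: card_Diff_subset)
    ultimately show ?thesis using A W by (simp add: card_cartesian_product)
  qed
  then show ?thesis
    by (subst perm_split[OF W s]) (simp add: sum_distrib_left)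
qed

lemma perm_cond_drop_bound:
  assumes W: "finite W" and s: "s \<le> card W"
    and b: "\<And>A. A \<subseteq> W \<Longrightarrow> card A = s \<Longrightarrow>
          real (card {vs \<in> permutations_of_set (W - A). \<Phi> A vs}) \<le> \<epsilon> * fact (card W - s)"
  shows "real (card {xs \<in> permutations_of_set W. \<Phi> (set (take s xs)) (drop s xs)}) \<le> \<epsilon> * fact (card W)"
proof -
  have "real (card {xs \<in> permutations_of_set W. \<Phi> (set (take s xs)) (drop s xs)}) =
     fact s * (\<Sum>A\<in>{A. A \<subseteq> W \<and> card A = s}. real (card {vs \<in> permutations_of_set (W - A). \<Phi> A vs}))"
    by (subst perm_cond_drop[OF W s]) simp
  also have "\<dots> \<le> fact s * (\<Sum>A\<in>{A. A \<subseteq> W \<and> card A = s}. \<epsilon> * fact (card W - s))"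
    by (intro mult_left_mono sum_mono) (simp_all add: b)
  also have "\<dots> = \<epsilon> * (fact s * fact (card W - s) * real (card W choose s))"
    using W by (simp add: n_subsets)
  also have "fact s * fact (card W - s) * real (card W choose s) = fact (card W)"
    using binomial_fact_lemma[OF s] by (metis of_nat_fact of_nat_mult)
  finally show ?thesis .
qed

lemma perm_cond_take_bound:
  assumes W: "finite W" and s: "s \<le> card W"
    and b: "\<And>A. A \<subseteq> W \<Longrightarrow> card A = s \<Longrightarrow>
          real (card {us \<in> permutations_of_set A. \<Psi> A us}) \<le> \<epsilon> * fact s"
  shows "real (card {xs \<in> permutations_of_set W. \<Psi> (set (take s xs)) (take s xs)}) \<le> \<epsilon> * fact (card W)"
proof -
  have "real (card {xs \<in> permutations_of_set W. \<Psi> (set (take s xs)) (take s xs)}) =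
     fact (card W - s) * (\<Sum>A\<in>{A. A \<subseteq> W \<and> card A = s}. real (card {us \<in> permutations_of_set A. \<Psi> A us}))"
    by (subst perm_cond_take[OF W s]) simp
  also have "\<dots> \<le> fact (card W - s) * (\<Sum>A\<in>{A. A \<subseteq> W \<and> card A = s}. \<epsilon> * fact s)"
    by (intro mult_left_mono sum_mono) (simp_all add: b)
  also have "\<dots> = \<epsilon> * (fact s * fact (card W - s) * real (card W choose s))"
    using W by (simp add: n_subsets)
  also have "fact s * fact (card W - s) * real (card W choose s) = fact (card W)"
    using binomial_fact_lemma[OF s] by (metis of_nat_fact of_nat_mult)
  finally show ?thesis .
qed

lemma perm_subset_bound:
  assumes W: "finite W" and s: "s \<le> card W"
    and b: "real (card {A. A \<subseteq> W \<and> card A = s \<and> \<Psi> A}) \<le> \<epsilon> * real (card W choose s)"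
  shows "real (card {xs \<in> permutations_of_set W. \<Psi> (set (take s xs))}) \<le> \<epsilon> * fact (card W)"
proof -
  have "real (card {xs \<in> permutations_of_set W. \<Psi> (set (take s xs))}) =
     fact s * (\<Sum>A\<in>{A. A \<subseteq> W \<and> card A = s}. real (card {vs \<in> permutations_of_set (W - A). \<Psi> A}))"
    using perm_cond_drop[OF W s, of "\<lambda>A vs. \<Psi> A"] by simp
  also have "(\<Sum>A\<in>{A. A \<subseteq> W \<and> card A = s}. real (card {vs \<in> permutations_of_set (W - A). \<Psi> A}))
      = (\<Sum>A\<in>{A. A \<subseteq> W \<and> card A = s \<and> \<Psi> A}. fact (card W - s))"
  proof -
    have "(\<Sum>A\<in>{A. A \<subseteq> W \<and> card A = s}. real (card {vs \<in> permutations_of_set (W - A). \<Psi> A}))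
        = (\<Sum>A\<in>{A. A \<subseteq> W \<and> card A = s}. if \<Psi> A then fact (card W - s) else 0)"
      using W by (intro sum.cong) (auto simp: card_Diff_subset finite_subset)
    also have "\<dots> = (\<Sum>A\<in>{A. A \<subseteq> W \<and> card A = s \<and> \<Psi> A}. fact (card W - s))"
      using W by (subst sum.inter_filter[symmetric]) (auto intro!: sum.cong)
    finally show ?thesis .
  qed
  also have "fact s * (\<Sum>A\<in>{A. A \<subseteq> W \<and> card A = s \<and> \<Psi> A}. (fact (card W - s)::real)) =
       fact s * fact (card W - s) * real (card {A. A \<subseteq> W \<and> card A = s \<and> \<Psi> A})"
    by simp
  also have "\<dots> \<le> fact s * fact (card W - s) * (\<epsilon> * (card W choose s))"
    by (intro mult_left_mono b) auto
  also have "\<dots> = \<epsilon> * (fact s * fact (card W - s) * real (card W choose s))" by simp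
  also have "fact s * fact (card W - s) * real (card W choose s) = fact (card W)"
    using binomial_fact_lemma[OF s] by (metis of_nat_fact of_nat_mult)
  finally show ?thesis by simp
qed



lemma pow_sum:
  fixes v :: real
  assumes "finite Y"
  shows "(\<Sum>S\<in>Pow Y. v ^ card S) = (1 + v) ^ card Y"
proof -
  have "(1 + v) ^ card Y = (\<Prod>y\<in>Y. v + 1)" by (simp add: add.commute)
  also have "\<dots> = (\<Sum>S\<in>Pow Y. (\<Prod>y\<in>S. v) * (\<Prod>y\<in>Y - S. 1))"
    by (rule prod_add[OF assms])
  also have "\<dots> = (\<Sum>S\<in>Pow Y. v ^ card S)" by simp
  finally show ?thesis by simp
qed

lemma binom_ratio:
  fixes N s j :: nat
  assumes "j \<le> s" "s \<le> N"
  shows "(N - j choose (s - j)) * N ^ j \<le> (N choose s) * s ^ j"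
  using assms(1)
proof (induction j)
  case 0 then show ?case by simp
next
  case (Suc j)
  then have js: "j < s" by simp
  have IH: "(N - j choose (s - j)) * N ^ j \<le> (N choose s) * s ^ j" using Suc by simp
  have abs: "(N - j) * (N - Suc j choose (s - Suc j)) = (N - j choose (s - j)) * (s - j)"
  proof -
    have "Suc (N - Suc j) * (N - Suc j choose (s - Suc j)) =
          (Suc (N - Suc j) choose Suc (s - Suc j)) * Suc (s - Suc j)"
      by (rule Suc_times_binomial_eq)
    moreover have "Suc (N - Suc j) = N - j" "Suc (s - Suc j) = s - j" using js assms by auto
    ultimately show ?thesis by simp
  qed
  have le: "(s - j) * N \<le> s * (N - j)"
  proof -
    have a: "s * j \<le> j * N" using assms by (simp add: mult.commute)
    have e1: "(s - j) * N + j * N = s * N" using js by (simp add: add_mult_distrib[symmetric])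
    have e2: "s * (N - j) + s * j = s * N" using js assms by (simp add: add_mult_distrib2[symmetric])
    show ?thesis using a e1 e2 by linarith
  qed
  have "(N - j) * ((N - Suc j choose (s - Suc j)) * N) = (N - j choose (s - j)) * ((s - j) * N)"
    using abs by (metis mult.assoc)
  also have "\<dots> \<le> (N - j choose (s - j)) * (s * (N - j))" by (intro mult_left_mono le) simp
  finally have "(N - j) * ((N - Suc j choose (s - Suc j)) * N) \<le> (N - j) * ((N - j choose (s - j)) * s)"
    by (simp add: ac_simps)
  moreover have "N - j > 0" using js assms by simp
  ultimately have c: "(N - Suc j choose (s - Suc j)) * N \<le> (N - j choose (s - j)) * s" by simp
  have "(N - Suc j choose (s - Suc j)) * N ^ Suc j = ((N - Suc j choose (s - Suc j)) * N) * N ^ j"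
    by (simp add: ac_simps)
  also have "\<dots> \<le> ((N - j choose (s - j)) * s) * N ^ j" by (intro mult_right_mono c) simp
  also have "\<dots> = s * ((N - j choose (s - j)) * N ^ j)" by (simp add: ac_simps)
  also have "\<dots> \<le> s * ((N choose s) * s ^ j)" by (intro mult_left_mono IH) simp
  also have "\<dots> = (N choose s) * s ^ Suc j" by (simp add: ac_simps)
  finally show ?case .
qed

lemma card_supersets:
  assumes W: "finite W" and S: "S \<subseteq> W" and cs: "card S \<le> s"
  shows "card {A. A \<subseteq> W \<and> card A = s \<and> S \<subseteq> A} = (card W - card S) choose (s - card S)"
proof -
  have fS: "finite S" using W S finite_subset by auto
  have eq: "{A. A \<subseteq> W \<and> card A = s \<and> S \<subseteq> A} =
        (\<lambda>A'. A' \<union> S) ` {A'. A' \<subseteq> W - S \<and> card A' = s - card S}"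
  proof (intro equalityI subsetI)
    fix A assume "A \<in> {A. A \<subseteq> W \<and> card A = s \<and> S \<subseteq> A}"
    then have A: "A \<subseteq> W" "card A = s" "S \<subseteq> A" by auto
    have "card (A - S) = s - card S" using A fS by (simp add: card_Diff_subset)
    then have "A - S \<in> {A'. A' \<subseteq> W - S \<and> card A' = s - card S}" using A by auto
    moreover have "A = (A - S) \<union> S" using A by auto
    ultimately show "A \<in> (\<lambda>A'. A' \<union> S) ` {A'. A' \<subseteq> W - S \<and> card A' = s - card S}" by blast
  next
    fix A assume "A \<in> (\<lambda>A'. A' \<union> S) ` {A'. A' \<subseteq> W - S \<and> card A' = s - card S}"
    then obtain A' where A': "A' \<subseteq> W - S" "card A' = s - card S" "A = A' \<union> S" by auto
    have "finite A'" using A' W finite_subset by blast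
    moreover have "A' \<inter> S = {}" using A' by blast
    ultimately have "card A = card A' + card S" using A' fS by (simp add: card_Un_disjoint)
    then show "A \<in> {A. A \<subseteq> W \<and> card A = s \<and> S \<subseteq> A}" using A' S cs by auto
  qed
  have inj: "inj_on (\<lambda>A'. A' \<union> S) {A'. A' \<subseteq> W - S \<and> card A' = s - card S}"
    by (rule inj_onI) blast
  have "card {A. A \<subseteq> W \<and> card A = s \<and> S \<subseteq> A} = card {A'. A' \<subseteq> W - S \<and> card A' = s - card S}"
    unfolding eq by (rule card_image[OF inj])
  also have "\<dots> = card (W - S) choose (s - card S)" using W by (simp add: n_subsets)
  also have "card (W - S) = card W - card S" using S fS by (simp add: card_Diff_subset)
  finally show ?thesis .
qed

lemma super_bound:
  assumes W: "finite W" and S: "S \<subseteq> W" and s: "s \<le> card W"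
  shows "real (card {A. A \<subseteq> W \<and> card A = s \<and> S \<subseteq> A}) \<le>
         real (card W choose s) * (real s / real (card W)) ^ card S"
proof (cases "card S \<le> s")
  case False
  have e: "{A. A \<subseteq> W \<and> card A = s \<and> S \<subseteq> A} = {}"
  proof (rule ccontr)
    assume "{A. A \<subseteq> W \<and> card A = s \<and> S \<subseteq> A} \<noteq> {}"
    then obtain A where "A \<subseteq> W" "card A = s" "S \<subseteq> A" by auto
    then have "card S \<le> s" using W finite_subset card_mono by metis
    then show False using False by simp
  qed
  show ?thesis by (subst e) simp
next
  case True
  let ?N = "card W" and ?j = "card S"
  have key: "real (?N - ?j choose (s - ?j)) * real ?N ^ ?j \<le> real (?N choose s) * real s ^ ?j"
    using binom_ratio[OF True s] by (metis of_nat_le_iff of_nat_mult of_nat_power)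
  show ?thesis
  proof (cases "?N = 0")
    case True
    then have "s = 0" using s by simp
    then have "?j = 0" using \<open>?j \<le> s\<close> by simp
    then show ?thesis using card_supersets[OF W S] True \<open>s = 0\<close> by simp
  next
    case False
    then have Npos: "real ?N > 0" by simp
    have "real (card {A. A \<subseteq> W \<and> card A = s \<and> S \<subseteq> A}) = real (?N - ?j choose (s - ?j))"
      using card_supersets[OF W S True] by simp
    also have "\<dots> \<le> real (?N choose s) * real s ^ ?j / real ?N ^ ?j"
      using key Npos by (simp add: field_simps)
    also have "\<dots> = real (?N choose s) * (real s / real ?N) ^ ?j" by (simp add: power_divide)
    finally show ?thesis .
  qed
qed

lemma mgf_bound:
  fixes u :: real
  assumes W: "finite W" and B: "B \<subseteq> W" and s: "s \<le> card W" and u: "u \<ge> 0"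
  shows "(\<Sum>A\<in>{A. A \<subseteq> W \<and> card A = s}. (1 + u) ^ card (B \<inter> A)) \<le>
         real (card W choose s) * (1 + u * real s / real (card W)) ^ card B"
proof -
  let ?K = "{A. A \<subseteq> W \<and> card A = s}"
  have fB: "finite B" using W B finite_subset by auto
  have fK: "finite ?K" using W by auto
  have "(\<Sum>A\<in>?K. (1 + u) ^ card (B \<inter> A)) = (\<Sum>A\<in>?K. \<Sum>S\<in>Pow (B \<inter> A). u ^ card S)"
    using fB by (intro sum.cong refl) (rule pow_sum[symmetric], use fB in auto)
  also have "\<dots> = (\<Sum>A\<in>?K. \<Sum>S\<in>Pow B. if S \<subseteq> A then u ^ card S else 0)"
  proof (rule sum.cong[OF refl])
    fix A assume "A \<in> ?K"
    have e: "Pow (B \<inter> A) = {S \<in> Pow B. S \<subseteq> A}" by auto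
    have "(\<Sum>S\<in>{S \<in> Pow B. S \<subseteq> A}. u ^ card S) = (\<Sum>S\<in>Pow B. if S \<subseteq> A then u ^ card S else 0)"
      by (rule sum.inter_filter) (use fB in simp)
    then show "(\<Sum>S\<in>Pow (B \<inter> A). u ^ card S) = (\<Sum>S\<in>Pow B. if S \<subseteq> A then u ^ card S else 0)"
      by (simp only: e)
  qed
  also have "\<dots> = (\<Sum>S\<in>Pow B. \<Sum>A\<in>?K. if S \<subseteq> A then u ^ card S else 0)"
    by (rule sum.swap)
  also have "\<dots> = (\<Sum>S\<in>Pow B. u ^ card S * real (card {A. A \<subseteq> W \<and> card A = s \<and> S \<subseteq> A}))"
  proof (rule sum.cong[OF refl])
    fix S assume "S \<in> Pow B"
    have "(\<Sum>A\<in>?K. if S \<subseteq> A then u ^ card S else 0) = (\<Sum>A\<in>{A \<in> ?K. S \<subseteq> A}. u ^ card S)"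
      by (rule sum.inter_filter[symmetric]) (use fK in simp)
    also have "{A \<in> ?K. S \<subseteq> A} = {A. A \<subseteq> W \<and> card A = s \<and> S \<subseteq> A}" by auto
    finally show "(\<Sum>A\<in>?K. if S \<subseteq> A then u ^ card S else 0) =
        u ^ card S * real (card {A. A \<subseteq> W \<and> card A = s \<and> S \<subseteq> A})" by (simp only: sum_constant) simp
  qed
  also have "\<dots> \<le> (\<Sum>S\<in>Pow B. u ^ card S * (real (card W choose s) * (real s / real (card W)) ^ card S))"
  proof (intro sum_mono mult_left_mono)
    fix S assume "S \<in> Pow B"
    then show "real (card {A. A \<subseteq> W \<and> card A = s \<and> S \<subseteq> A}) \<le>
         real (card W choose s) * (real s / real (card W)) ^ card S"
      using super_bound[OF W _ s, of S] B by auto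
  qed (use u in simp)
  also have "\<dots> = real (card W choose s) * (\<Sum>S\<in>Pow B. (u * real s / real (card W)) ^ card S)"
    unfolding sum_distrib_left
    by (rule sum.cong[OF refl]) (simp add: power_mult_distrib power_divide)
  also have "\<dots> = real (card W choose s) * (1 + u * real s / real (card W)) ^ card B"
    using fB by (simp add: pow_sum)
  finally show ?thesis .
qed



lemma ln_three_halves: "ln (3/2::real) \<ge> 2/5"
proof -
  have a: "exp (-(1/40)) \<ge> (39/40::real)" using exp_ge_add_one_self[of "-(1/40)::real"] by simp
  have b: "exp (1/40::real) \<le> 40/39"
  proof -
    have "exp (1/40::real) = 1 / exp (-(1/40))" by (simp add: exp_minus inverse_eq_divide)
    also have "\<dots> \<le> 1 / (39/40)" using a by (intro divide_left_mono) auto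
    finally show ?thesis by simp
  qed
  have "exp (2/5::real) = exp (1/40) ^ 16" using exp_of_nat_mult[of 16 "1/40::real"] by simp
  also have "\<dots> \<le> (40/39) ^ 16" by (intro power_mono b) simp
  also have "\<dots> \<le> (3/2::real)" by (simp add: power_divide)
  finally have "exp (2/5::real) \<le> 3/2" .
  then show ?thesis using ln_le_cancel_iff[of "exp (2/5)" "3/2::real"] by simp
qed

lemma ln_two_le: "ln (2::real) \<le> 4/5"
proof -
  have "(6/5::real) \<le> exp (1/5)" using exp_ge_add_one_self[of "1/5::real"] by simp
  then have "(6/5::real) ^ 4 \<le> exp (1/5) ^ 4" by (intro power_mono) auto
  moreover have "exp (4/5::real) = exp (1/5) ^ 4" using exp_of_nat_mult[of 4 "1/5::real"] by simp
  moreover have "(2::real) \<le> (6/5) ^ 4" by (simp add: power_divide)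
  ultimately have "2 \<le> exp (4/5::real)" by linarith
  then show ?thesis using ln_le_cancel_iff[of 2 "exp (4/5)::real"] by simp
qed

lemma one_plus_pow_le_exp:
  fixes x :: real assumes "x \<ge> 0"
  shows "(1 + x) ^ m \<le> exp (real m * x)"
proof -
  have "(1 + x) ^ m \<le> exp x ^ m" using assms by (intro power_mono) (auto simp: exp_ge_add_one_self add.commute)
  also have "\<dots> = exp (real m * x)" by (simp add: exp_of_nat_mult)
  finally show ?thesis .
qed

lemma upper_tail:
  assumes W: "finite W" and B: "B \<subseteq> W" and s: "s \<le> card W" and N: "card W > 0"
  defines "\<mu> \<equiv> real s * real (card B) / real (card W)"
  shows "real (card {A. A \<subseteq> W \<and> card A = s \<and> 3/2 * \<mu> \<le> real (card (B \<inter> A))})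
         \<le> exp (-\<mu>/10) * real (card W choose s)"
proof -
  let ?K = "{A. A \<subseteq> W \<and> card A = s}"
  let ?U = "{A. A \<subseteq> W \<and> card A = s \<and> 3/2 * \<mu> \<le> real (card (B \<inter> A))}"
  have fK: "finite ?K" using W by auto
  have UK: "?U \<subseteq> ?K" by auto
  have mu0: "\<mu> \<ge> 0" unfolding \<mu>_def by simp
  have "real (card ?U) * exp (3/2 * \<mu> * ln (3/2)) = (\<Sum>A\<in>?U. exp (3/2 * \<mu> * ln (3/2)))" by simp
  also have "\<dots> \<le> (\<Sum>A\<in>?U. (1 + 1/2) ^ card (B \<inter> A))"
  proof (rule sum_mono)
    fix A assume "A \<in> ?U"
    then have h: "3/2 * \<mu> \<le> real (card (B \<inter> A))" by simp
    have "exp (3/2 * \<mu> * ln (3/2)) \<le> exp (real (card (B \<inter> A)) * ln (3/2))"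
      using h by (intro exp_le_cancel_iff[THEN iffD2] mult_right_mono) auto
    also have "\<dots> = (3/2) ^ card (B \<inter> A)" by (simp add: exp_of_nat_mult)
    finally show "exp (3/2 * \<mu> * ln (3/2)) \<le> (1 + 1/2) ^ card (B \<inter> A)" by simp
  qed
  also have "\<dots> \<le> (\<Sum>A\<in>?K. (1 + 1/2) ^ card (B \<inter> A))"
    by (rule sum_mono2[OF fK UK]) simp
  also have "\<dots> \<le> real (card W choose s) * (1 + 1/2 * real s / real (card W)) ^ card B"
    by (rule mgf_bound[OF W B s]) simp
  also have "\<dots> \<le> real (card W choose s) * exp (real (card B) * (1/2 * real s / real (card W)))"
    by (intro mult_left_mono one_plus_pow_le_exp) auto
  also have "real (card B) * (1/2 * real s / real (card W)) = \<mu> / 2" unfolding \<mu>_def by (simp add: field_simps)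
  finally have *: "real (card ?U) * exp (3/2 * \<mu> * ln (3/2)) \<le> real (card W choose s) * exp (\<mu> / 2)" .
  have "real (card ?U) = real (card ?U) * exp (3/2 * \<mu> * ln (3/2)) * exp (- (3/2 * \<mu> * ln (3/2)))"
    by (simp add: exp_minus)
  also have "\<dots> \<le> real (card W choose s) * exp (\<mu> / 2) * exp (- (3/2 * \<mu> * ln (3/2)))"
    by (intro mult_right_mono *) simp
  also have "\<dots> = real (card W choose s) * exp (\<mu> / 2 + - (3/2 * \<mu> * ln (3/2)))"
    by (simp only: mult.assoc exp_add[symmetric])
  also have "\<dots> \<le> real (card W choose s) * exp (-\<mu>/10)"
  proof -
    have "3/2 * \<mu> * (2/5) \<le> 3/2 * \<mu> * ln (3/2)"
      using ln_three_halves mu0 by (intro mult_left_mono) auto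
    then have "\<mu> / 2 + - (3/2 * \<mu> * ln (3/2)) \<le> -\<mu>/10" by simp
    then show ?thesis by (intro mult_left_mono) auto
  qed
  finally show ?thesis by (simp add: mult.commute)
qed

lemma lower_tail:
  assumes W: "finite W" and B: "B \<subseteq> W" and s: "s \<le> card W" and N: "card W > 0"
  defines "\<mu> \<equiv> real s * real (card B) / real (card W)"
  shows "real (card {A. A \<subseteq> W \<and> card A = s \<and> real (card (B \<inter> A)) \<le> \<mu> / 2})
         \<le> exp (-\<mu>/10) * real (card W choose s)"
proof -
  let ?L = "{A. A \<subseteq> W \<and> card A = s \<and> real (card (B \<inter> A)) \<le> \<mu> / 2}"
  let ?K' = "{A. A \<subseteq> W \<and> card A = card W - s}"
  let ?m = "card B"
  have fB: "finite B" using W B finite_subset by auto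
  have fK: "finite ?K'" using W by auto
  have mu0: "\<mu> \<ge> 0" unfolding \<mu>_def by simp
  have inj: "inj_on (\<lambda>A. W - A) ?L" by (rule inj_onI) blast
  have img: "(\<lambda>A. W - A) ` ?L \<subseteq> ?K'"
  proof
    fix A' assume "A' \<in> (\<lambda>A. W - A) ` ?L"
    then obtain A where A: "A \<subseteq> W" "card A = s" "A' = W - A" by auto
    have "finite A" using A W finite_subset by auto
    then show "A' \<in> ?K'" using A by (auto simp: card_Diff_subset)
  qed
  have "real (card ?L) * 2 powr (real ?m - \<mu>/2) = (\<Sum>A\<in>?L. 2 powr (real ?m - \<mu>/2))" by simp
  also have "\<dots> \<le> (\<Sum>A\<in>?L. (1 + 1) ^ card (B \<inter> (W - A)))"
  proof (rule sum_mono)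
    fix A assume "A \<in> ?L"
    then have A: "A \<subseteq> W" "real (card (B \<inter> A)) \<le> \<mu> / 2" by auto
    have fA: "finite A" using A W finite_subset by auto
    have "card (B \<inter> (W - A)) + card (B \<inter> A) = ?m"
    proof -
      have "B \<inter> (W - A) = B - (B \<inter> A)" using B by auto
      then have "card (B \<inter> (W - A)) = ?m - card (B \<inter> A)" using fB by (simp add: card_Diff_subset_Int)
      moreover have "card (B \<inter> A) \<le> ?m" using fB by (simp add: card_mono)
      ultimately show ?thesis by simp
    qed
    then have "real ?m - \<mu>/2 \<le> real (card (B \<inter> (W - A)))" using A(2) by linarith
    then have "2 powr (real ?m - \<mu>/2) \<le> 2 powr real (card (B \<inter> (W - A)))" by (intro powr_mono) auto
    also have "\<dots> = 2 ^ card (B \<inter> (W - A))" by (simp add: powr_realpow)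
    finally show "2 powr (real ?m - \<mu>/2) \<le> (1 + 1) ^ card (B \<inter> (W - A))" by simp
  qed
  also have "\<dots> = (\<Sum>A'\<in>(\<lambda>A. W - A) ` ?L. (1 + 1) ^ card (B \<inter> A'))"
    by (simp only: sum.reindex[OF inj] o_def)
  also have "\<dots> \<le> (\<Sum>A'\<in>?K'. (1 + 1) ^ card (B \<inter> A'))"
    by (rule sum_mono2[OF fK img]) simp
  also have "\<dots> \<le> real (card W choose (card W - s)) * (1 + 1 * real (card W - s) / real (card W)) ^ ?m"
    by (rule mgf_bound[OF W B]) auto
  also have "card W choose (card W - s) = card W choose s" using binomial_symmetric[OF s] by simp
  also have "(1 + 1 * real (card W - s) / real (card W)) = 2 * (1 - real s / real (card W) / 2)"
    using s N by (simp add: of_nat_diff field_simps)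
  also have "(2 * (1 - real s / real (card W) / 2)) ^ ?m = 2 ^ ?m * (1 + (- (real s / real (card W) / 2))) ^ ?m"
    unfolding power_mult_distrib by simp
  also have "real (card W choose s) * (2 ^ ?m * (1 + (- (real s / real (card W) / 2))) ^ ?m) \<le>
      real (card W choose s) * (2 ^ ?m * exp (- (real s / real (card W) / 2)) ^ ?m)"
  proof -
    have "0 \<le> 1 + (- (real s / real (card W) / 2))"
      using s N by (simp add: field_simps)
    moreover have "1 + (- (real s / real (card W) / 2)) \<le> exp (- (real s / real (card W) / 2))"
      using exp_ge_add_one_self[of "- (real s / real (card W) / 2)"] by (simp only: add.commute)
    ultimately show ?thesis
      by (intro mult_left_mono power_mono) auto
  qed
  also have "exp (- (real s / real (card W) / 2)) ^ ?m = exp (- \<mu> / 2)"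
    unfolding \<mu>_def by (simp add: exp_of_nat_mult[symmetric] field_simps)
  finally have *: "real (card ?L) * 2 powr (real ?m - \<mu>/2) \<le> real (card W choose s) * (2 ^ ?m * exp (- \<mu> / 2))" .
  have e2: "2 powr (real ?m - \<mu>/2) = 2 ^ ?m / exp (\<mu>/2 * ln 2)"
  proof -
    have "(2::real) powr (real ?m - \<mu>/2) = 2 powr real ?m / 2 powr (\<mu>/2)" by (rule powr_diff)
    also have "(2::real) powr real ?m = 2 ^ ?m" by (rule powr_realpow) simp
    also have "(2::real) powr (\<mu>/2) = exp (\<mu>/2 * ln 2)" by (simp add: powr_def)
    finally show ?thesis .
  qed
  have "real (card ?L) = real (card ?L) * 2 powr (real ?m - \<mu>/2) * (exp (\<mu>/2 * ln 2) / 2 ^ ?m)"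
    by (simp add: e2)
  also have "\<dots> \<le> real (card W choose s) * (2 ^ ?m * exp (- \<mu> / 2)) * (exp (\<mu>/2 * ln 2) / 2 ^ ?m)"
    by (intro mult_right_mono *) simp
  also have "\<dots> = real (card W choose s) * (exp (- \<mu> / 2) * exp (\<mu>/2 * ln 2))"
    by simp
  also have "exp (- \<mu> / 2) * exp (\<mu>/2 * ln 2) = exp (- \<mu> / 2 + \<mu>/2 * ln 2)"
    by (rule exp_add[symmetric])
  also have "real (card W choose s) * exp (- \<mu> / 2 + \<mu>/2 * ln 2) \<le> real (card W choose s) * exp (-\<mu>/10)"
  proof -
    have "\<mu>/2 * ln 2 \<le> \<mu>/2 * (4/5)" using ln_two_le mu0 by (intro mult_left_mono) auto
    then show ?thesis by (intro mult_left_mono) auto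
  qed
  finally show ?thesis by (simp add: mult.commute)
qed

lemma not_well_rep_tail:
  assumes W: "finite W" and B: "B \<subseteq> W" "B \<noteq> {}" and s: "s \<le> card W"
  defines "\<mu> \<equiv> real s * real (card B) / real (card W)"
  shows "real (card {A. A \<subseteq> W \<and> card A = s \<and> \<not> well_rep W A B})
         \<le> 2 * exp (-\<mu>/10) * real (card W choose s)"
proof -
  have fB: "finite B" using W B finite_subset by auto
  have N: "card W > 0" using W B by (metis card_gt_0_iff finite_subset subset_empty)
  have Bpos: "real (card B) > 0" using fB B by (simp add: card_gt_0_iff)
  have sub: "{A. A \<subseteq> W \<and> card A = s \<and> \<not> well_rep W A B} \<subseteq>
      {A. A \<subseteq> W \<and> card A = s \<and> 3/2 * \<mu> \<le> real (card (B \<inter> A))} \<union>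
      {A. A \<subseteq> W \<and> card A = s \<and> real (card (B \<inter> A)) \<le> \<mu> / 2}"
  proof
    fix A assume "A \<in> {A. A \<subseteq> W \<and> card A = s \<and> \<not> well_rep W A B}"
    then have A: "A \<subseteq> W" "card A = s" "\<not> well_rep W A B" by auto
    let ?r = "real s / real (card W)" and ?q = "real (card (B \<inter> A)) / real (card B)"
    have "\<not> (?r / 2 \<le> ?q \<and> ?q \<le> 3/2 * ?r)" using A unfolding well_rep_def Let_def by simp
    moreover have "?r / 2 \<le> ?q \<longleftrightarrow> \<mu> / 2 \<le> real (card (B \<inter> A))"
      using Bpos unfolding \<mu>_def by (simp add: field_simps)
    moreover have "?q \<le> 3/2 * ?r \<longleftrightarrow> real (card (B \<inter> A)) \<le> 3/2 * \<mu>"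
      using Bpos unfolding \<mu>_def by (simp add: field_simps)
    ultimately show "A \<in> {A. A \<subseteq> W \<and> card A = s \<and> 3/2 * \<mu> \<le> real (card (B \<inter> A))} \<union>
      {A. A \<subseteq> W \<and> card A = s \<and> real (card (B \<inter> A)) \<le> \<mu> / 2}" using A by auto
  qed
  have fin: "finite {A. A \<subseteq> W \<and> card A = s \<and> 3/2 * \<mu> \<le> real (card (B \<inter> A))}"
            "finite {A. A \<subseteq> W \<and> card A = s \<and> real (card (B \<inter> A)) \<le> \<mu> / 2}" using W by auto
  have "card {A. A \<subseteq> W \<and> card A = s \<and> \<not> well_rep W A B} \<le>
      card ({A. A \<subseteq> W \<and> card A = s \<and> 3/2 * \<mu> \<le> real (card (B \<inter> A))} \<union>
      {A. A \<subseteq> W \<and> card A = s \<and> real (card (B \<inter> A)) \<le> \<mu> / 2})"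
    by (rule card_mono[OF _ sub]) (use fin in auto)
  also have "\<dots> \<le> card {A. A \<subseteq> W \<and> card A = s \<and> 3/2 * \<mu> \<le> real (card (B \<inter> A))} +
      card {A. A \<subseteq> W \<and> card A = s \<and> real (card (B \<inter> A)) \<le> \<mu> / 2}" by (rule card_Un_le)
  finally have "real (card {A. A \<subseteq> W \<and> card A = s \<and> \<not> well_rep W A B}) \<le>
      real (card {A. A \<subseteq> W \<and> card A = s \<and> 3/2 * \<mu> \<le> real (card (B \<inter> A))}) +
      real (card {A. A \<subseteq> W \<and> card A = s \<and> real (card (B \<inter> A)) \<le> \<mu> / 2})" by linarith
  also have "\<dots> \<le> exp (-\<mu>/10) * real (card W choose s) + exp (-\<mu>/10) * real (card W choose s)"
    using upper_tail[OF W B(1) s N] lower_tail[OF W B(1) s N] unfolding \<mu>_def by (intro add_mono) auto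
  finally show ?thesis by (simp add: ac_simps)
qed



lemma perm_cons_card:
  assumes Q: "finite Q" "Q \<noteq> {}"
  shows "card {ps \<in> permutations_of_set Q. P ps} = (\<Sum>x\<in>Q. card {ps \<in> permutations_of_set (Q - {x}). P (x # ps)})"
proof -
  have eq: "{ps \<in> permutations_of_set Q. P ps} = (\<Union>x\<in>Q. (\<lambda>ps. x # ps) ` {ps \<in> permutations_of_set (Q - {x}). P (x # ps)})"
    using permutations_of_set_nonempty[OF Q(2)] by auto
  have "card (\<Union>x\<in>Q. (\<lambda>ps. x # ps) ` {ps \<in> permutations_of_set (Q - {x}). P (x # ps)}) =
     (\<Sum>x\<in>Q. card ((\<lambda>ps. x # ps) ` {ps \<in> permutations_of_set (Q - {x}). P (x # ps)}))"
    by (rule card_UN_disjoint[OF Q(1)]) auto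
  also have "\<dots> = (\<Sum>x\<in>Q. card {ps \<in> permutations_of_set (Q - {x}). P (x # ps)})"
    by (rule sum.cong[OF refl]) (rule card_image, simp)
  finally show ?thesis unfolding eq .
qed

lemma filter_prefix_bound:
  assumes "finite Q" "D \<subseteq> Q" "Bd \<subseteq> D"
  shows "real (card {ps \<in> permutations_of_set Q. set (take L (filter (\<lambda>x. x \<in> D) ps)) \<subseteq> Bd})
     \<le> (if D = {} then 1 else real (card Bd) / real (card D)) ^ L * fact (card Q)"
  using assms
proof (induction "card Q" arbitrary: Q D Bd L)
  case 0
  then have "Q = {}" by simp
  then have "D = {}" using 0 by auto
  have "card {ps \<in> permutations_of_set Q. set (take L (filter (\<lambda>x. x \<in> D) ps)) \<subseteq> Bd} \<le> card (permutations_of_set Q)"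
    by (rule card_mono) auto
  then show ?case using \<open>Q = {}\<close> \<open>D = {}\<close> by simp
next
  case (Suc n)
  let ?P = "\<lambda>L D Bd ps. set (take L (filter (\<lambda>x. x \<in> D) ps)) \<subseteq> Bd"
  define r where "r = (if D = {} then 1 else real (card Bd) / real (card D))"
  have fD: "finite D" using Suc.prems finite_subset by auto
  have fBd: "finite Bd" using Suc.prems fD finite_subset by auto
  have r0: "r \<ge> 0" unfolding r_def by simp
  have Qne: "Q \<noteq> {}" using Suc.hyps by auto
  have cQx: "\<And>x. x \<in> Q \<Longrightarrow> card (Q - {x}) = n" using Suc.hyps Suc.prems by simp
  show ?case
  proof (cases L)
    case 0
    have "card {ps \<in> permutations_of_set Q. ?P L D Bd ps} \<le> card (permutations_of_set Q)"
      by (rule card_mono) auto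
    then show ?thesis using 0 Suc.prems by simp
  next
    case (Suc L')
    have each: "real (card {ps \<in> permutations_of_set (Q - {x}). ?P L D Bd (x # ps)}) \<le>
        (if x \<in> D then (if x \<in> Bd then r ^ L' else 0) else r ^ L) * fact n" if x: "x \<in> Q" for x
    proof (cases "x \<in> D")
      case False
      have "{ps \<in> permutations_of_set (Q - {x}). ?P L D Bd (x # ps)} = {ps \<in> permutations_of_set (Q - {x}). ?P L D Bd ps}"
        using False by simp
      moreover have "real (card {ps \<in> permutations_of_set (Q - {x}). ?P L D Bd ps}) \<le> r ^ L * fact n"
      proof -
        have Dx: "D \<subseteq> Q - {x}" using Suc.prems False by auto
        have "finite (Q - {x})" using Suc.prems by simp
        then show ?thesis
          using Suc.hyps(1)[of "Q - {x}" D Bd L] cQx[OF x] Suc.prems(3) Dx unfolding r_def by simp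
      qed
      ultimately show ?thesis using False by simp
    next
      case True
      show ?thesis
      proof (cases "x \<in> Bd")
        case False
        have "{ps \<in> permutations_of_set (Q - {x}). ?P L D Bd (x # ps)} = {}"
          using True False \<open>L = Suc L'\<close> by auto
        then show ?thesis using True False by simp
      next
        case xB: True
        have "{ps \<in> permutations_of_set (Q - {x}). ?P L D Bd (x # ps)} =
            {ps \<in> permutations_of_set (Q - {x}). ?P L' (D - {x}) (Bd - {x}) ps}"
        proof (intro Collect_cong conj_cong refl)
          fix ps assume ps: "ps \<in> permutations_of_set (Q - {x})"
          then have xn: "x \<notin> set ps" by (auto simp: permutations_of_set_def)
          have ff: "filter (\<lambda>y. y \<in> D) ps = filter (\<lambda>y. y \<in> D - {x}) ps"
            using xn by (intro filter_cong) auto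
          have sub: "set (take L' (filter (\<lambda>y. y \<in> D - {x}) ps)) \<subseteq> D - {x}"
            using set_take_subset by fastforce
          show "?P L D Bd (x # ps) = ?P L' (D - {x}) (Bd - {x}) ps"
            using True xB \<open>L = Suc L'\<close> ff sub by auto
        qed
        moreover have "real (card {ps \<in> permutations_of_set (Q - {x}). ?P L' (D - {x}) (Bd - {x}) ps}) \<le>
             (if D - {x} = {} then 1 else real (card (Bd - {x})) / real (card (D - {x}))) ^ L' * fact n"
        proof -
          have "finite (Q - {x})" "D - {x} \<subseteq> Q - {x}" "Bd - {x} \<subseteq> D - {x}" using Suc.prems by auto
          from Suc.hyps(1)[OF _ this] show ?thesis using cQx[OF x] by simp
        qed
        moreover have "(if D - {x} = {} then 1 else real (card (Bd - {x})) / real (card (D - {x}))) \<le> r"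
        proof (cases "D - {x} = {}")
          case True
          then have "D = {x}" using \<open>x \<in> D\<close> by auto
          then have "Bd = {x}" using xB Suc.prems by auto
          then show ?thesis using True \<open>D = {x}\<close> unfolding r_def by simp
        next
          case False
          have m: "card (D - {x}) = card D - 1" "card (Bd - {x}) = card Bd - 1"
            using \<open>x \<in> D\<close> xB fD fBd by auto
          have m2: "card D \<ge> 2"
          proof -
            obtain y where "y \<in> D - {x}" using False by auto
            then have "{x, y} \<subseteq> D" "x \<noteq> y" using \<open>x \<in> D\<close> by auto
            then show ?thesis using fD card_mono[OF fD \<open>{x,y} \<subseteq> D\<close>] by simp
          qed
          have bm: "card Bd \<le> card D" using fD Suc.prems by (simp add: card_mono)
          have b1: "card Bd \<ge> 1" using xB fBd by (metis One_nat_def Suc_leI card_gt_0_iff empty_iff)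
          have "real (card Bd - 1) / real (card D - 1) \<le> real (card Bd) / real (card D)"
            using m2 bm b1 by (simp add: field_simps of_nat_diff)
          then show ?thesis using False m \<open>x \<in> D\<close> unfolding r_def by auto
        qed
        ultimately have "real (card {ps \<in> permutations_of_set (Q - {x}). ?P L D Bd (x # ps)}) \<le> r ^ L' * fact n"
          by (smt (verit, ccfv_threshold) fact_gt_zero mult_right_mono power_mono zero_le_divide_iff of_nat_0_le_iff)
        then show ?thesis using True xB by simp
      qed
    qed
    have "real (card {ps \<in> permutations_of_set Q. ?P L D Bd ps}) =
        (\<Sum>x\<in>Q. real (card {ps \<in> permutations_of_set (Q - {x}). ?P L D Bd (x # ps)}))"
      by (subst perm_cons_card[OF Suc.prems(1) Qne]) simp
    also have "\<dots> \<le> (\<Sum>x\<in>Q. (if x \<in> D then (if x \<in> Bd then r ^ L' else 0) else r ^ L) * fact n)"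
      by (rule sum_mono) (rule each)
    also have "\<dots> = ((\<Sum>x\<in>Q - D. r ^ L) + (\<Sum>x\<in>D. if x \<in> Bd then r ^ L' else 0)) * fact n"
    proof -
      have "(\<Sum>x\<in>Q. (if x \<in> D then (if x \<in> Bd then r ^ L' else 0) else r ^ L)) =
          (\<Sum>x\<in>Q - D. (if x \<in> D then (if x \<in> Bd then r ^ L' else 0) else r ^ L)) +
          (\<Sum>x\<in>D. (if x \<in> D then (if x \<in> Bd then r ^ L' else 0) else r ^ L))"
        by (rule sum.subset_diff[OF Suc.prems(2) Suc.prems(1)])
      also have "\<dots> = (\<Sum>x\<in>Q - D. r ^ L) + (\<Sum>x\<in>D. if x \<in> Bd then r ^ L' else 0)"
        by (intro arg_cong2[where f="(+)"] sum.cong) auto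
      finally show ?thesis by (simp only: sum_distrib_right[symmetric])
    qed
    also have "(\<Sum>x\<in>D. if x \<in> Bd then r ^ L' else 0) = (\<Sum>x\<in>D \<inter> Bd. r ^ L')"
      by (rule sum.inter_restrict[symmetric, OF fD])
    also have "D \<inter> Bd = Bd" using Suc.prems by auto
    also have "(\<Sum>x\<in>Q - D. r ^ L) + (\<Sum>x\<in>Bd. r ^ L') = real (card Q - card D) * r ^ L + real (card Bd) * r ^ L'"
      using Suc.prems fD by (simp add: card_Diff_subset)
    also have "real (card Bd) * r ^ L' = real (card D) * r ^ L"
    proof (cases "D = {}")
      case True then show ?thesis using Suc.prems by simp
    next
      case False
      then have "real (card D) > 0" using fD by (simp add: card_gt_0_iff)
      then show ?thesis using False \<open>L = Suc L'\<close> unfolding r_def by simp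
    qed
    also have "(real (card Q - card D) * r ^ L + real (card D) * r ^ L) * fact n = r ^ L * fact (card Q)"
    proof -
      have "card D \<le> card Q" using Suc.prems by (simp add: card_mono)
      then have "real (card Q - card D) + real (card D) = real (card Q)" by simp
      moreover have "fact (card Q) = real (card Q) * fact n" using Suc.hyps(2)
        by (metis fact_Suc of_nat_fact of_nat_mult)
      ultimately show ?thesis by (simp add: algebra_simps)
    qed
    finally show ?thesis unfolding r_def by simp
  qed
qed



lemma aux10: "10 * L \<le> (t::real) \<Longrightarrow> - t / 10 \<le> - L" by linarith

lemma single_bound:
  assumes V: "finite V" and B: "B \<subseteq> V" "B \<noteq> {}" and s: "s \<le> card V"
    and L: "10 * L \<le> real s * real (card B) / real (card V)"
  shows "real (card {vs \<in> permutations_of_set V. \<not> well_rep V (set (take s vs)) B}) \<le> 2 * exp (-L) * fact (card V)"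
proof (rule perm_subset_bound[OF V s])
  have "real (card {A. A \<subseteq> V \<and> card A = s \<and> \<not> well_rep V A B}) \<le>
     2 * exp (-(real s * real (card B) / real (card V))/10) * real (card V choose s)"
    by (rule not_well_rep_tail[OF V B s])
  also have "\<dots> \<le> 2 * exp (-L) * real (card V choose s)"
  proof -
    have l: "-(real s * real (card B) / real (card V))/10 \<le> -L" by (rule aux10[OF L])
    show ?thesis using l by (intro mult_right_mono mult_left_mono) auto
  qed
  finally show "real (card {A. A \<subseteq> V \<and> card A = s \<and> \<not> well_rep V A B}) \<le> 2 * exp (-L) * real (card V choose s)" .
qed

lemma geom_bound:
  fixes L :: real
  assumes L: "64 \<le> exp L"
  shows "(\<Sum>j<n. 2 * exp (- (L * (real j + 2) / 2))) \<le> 16/7 * exp (-L)"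
proof -
  define x where "x = exp (- L / 2)"
  have x0: "x > 0" unfolding x_def by simp
  have "exp (L/2) ^ 2 = exp L" by (simp add: exp_of_nat_mult[symmetric])
  then have "exp (L/2) ^ 2 \<ge> 8 ^ 2" using L by simp
  then have e8: "exp (L/2) \<ge> 8" by (rule power2_le_imp_le) simp
  have x8: "x \<le> 1/8"
  proof -
    have "x = 1 / exp (L/2)" unfolding x_def by (simp add: exp_minus inverse_eq_divide)
    also have "\<dots> \<le> 1 / 8" using e8 by (intro divide_left_mono) auto
    finally show ?thesis .
  qed
  have trm: "2 * exp (- (L * (real j + 2) / 2)) = 2 * exp (-L) * x ^ j" for j
  proof -
    have "exp (-L) * x ^ j = exp (-L) * exp (real j * (- L / 2))" unfolding x_def by (simp only: exp_of_nat_mult)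
    also have "\<dots> = exp (-L + real j * (- L / 2))" by (simp only: exp_add)
    also have "-L + real j * (- L / 2) = - (L * (real j + 2) / 2)" by (simp add: algebra_simps)
    finally show ?thesis by simp
  qed
  have "(\<Sum>j<n. 2 * exp (- (L * (real j + 2) / 2))) = 2 * exp (-L) * (\<Sum>j<n. x ^ j)"
    by (simp add: trm sum_distrib_left)
  also have "(\<Sum>j<n. x ^ j) = (1 - x ^ n) / (1 - x)" using x8 by (simp add: sum_gp_strict)
  also have "\<dots> \<le> 1 / (1 - x)" using x0 x8 by (intro divide_right_mono) auto
  also have "\<dots> \<le> 8 / 7" using x8 x0 by (simp add: field_simps)
  finally have "(\<Sum>j<n. 2 * exp (- (L * (real j + 2) / 2))) \<le> 2 * exp (-L) * (8/7)"
    by (simp add: mult_left_mono)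
  then show ?thesis by simp
qed

lemma bins_bound:
  assumes V: "finite V" and WV: "W \<subseteq> V" and lb: "linear_bin_division \<rho> z W T Bs"
    and zW: "z \<le> real (card W)" and z0: "0 < z" and s: "s \<le> card V"
    and L: "10 * L \<le> real s * z / real (card V)" and L64: "64 \<le> exp L"
  shows "real (card {vs \<in> permutations_of_set V. \<not> bins_well_rep V (set (take s vs)) Bs}) \<le> 16/7 * exp (-L) * fact (card V)"
proof -
  have unionW: "\<Union>(set Bs) = W" and sizes: "\<And>i. i < length Bs \<Longrightarrow> real (card (Bs!i)) \<ge> z * (real i + 2) / 2"
    using lb zW unfolding linear_bin_division_def by auto
  let ?E = "\<lambda>j. {vs \<in> permutations_of_set V. \<not> well_rep V (set (take s vs)) (Bs!j)}"
  have sub: "{vs \<in> permutations_of_set V. \<not> bins_well_rep V (set (take s vs)) Bs} \<subseteq> (\<Union>j<length Bs. ?E j)"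
    unfolding bins_well_rep_def by (auto simp: in_set_conv_nth)
  have "card {vs \<in> permutations_of_set V. \<not> bins_well_rep V (set (take s vs)) Bs} \<le> card (\<Union>j<length Bs. ?E j)"
    by (rule card_mono[OF _ sub]) auto
  also have "\<dots> \<le> (\<Sum>j<length Bs. card (?E j))" by (rule card_UN_le) simp
  finally have "real (card {vs \<in> permutations_of_set V. \<not> bins_well_rep V (set (take s vs)) Bs}) \<le> (\<Sum>j<length Bs. real (card (?E j)))"
    by (simp flip: of_nat_sum)
  also have "\<dots> \<le> (\<Sum>j<length Bs. 2 * exp (- (L * (real j + 2) / 2)) * fact (card V))"
  proof (rule sum_mono)
    fix j assume "j \<in> {..<length Bs}"
    then have j: "j < length Bs" by simp
    have BW: "Bs!j \<subseteq> W" using unionW j by auto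
    have cz: "real (card (Bs!j)) \<ge> z * (real j + 2) / 2" by (rule sizes[OF j])
    have pos: "z * (real j + 2) / 2 > 0" using z0 by simp
    have ne: "Bs!j \<noteq> {}" using cz pos by auto
    have "10 * (L * (real j + 2) / 2) = (10 * L) * ((real j + 2) / 2)" by simp
    also have "\<dots> \<le> (real s * z / real (card V)) * ((real j + 2) / 2)"
      by (intro mult_right_mono L) simp
    also have "\<dots> = real s * (z * (real j + 2) / 2) / real (card V)" by simp
    also have "\<dots> \<le> real s * real (card (Bs!j)) / real (card V)"
      by (intro divide_right_mono mult_left_mono cz) auto
    finally show "real (card (?E j)) \<le> 2 * exp (- (L * (real j + 2) / 2)) * fact (card V)"
      using single_bound[OF V _ ne s, of "L * (real j + 2) / 2"] BW WV by auto
  qed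
  also have "\<dots> = (\<Sum>j<length Bs. 2 * exp (- (L * (real j + 2) / 2))) * fact (card V)"
    by (simp add: sum_distrib_right)
  also have "\<dots> \<le> 16/7 * exp (-L) * fact (card V)"
    by (intro mult_right_mono geom_bound L64) simp
  finally show ?thesis .
qed

lemma far_card:
  assumes S: "finite S" and r: "r \<le> real (card S)"
  shows "far \<rho> r S T \<subseteq> S" "real (card (far \<rho> r S T)) \<ge> r"
proof -
  show "far \<rho> r S T \<subseteq> S" unfolding far_def by auto
  let ?fb = "far_before \<rho> T"
  define rk where "rk x = card {y\<in>S. ?fb y x}" for x
  have irr: "\<not> ?fb x x" for x unfolding far_before_def by auto
  have trans: "?fb x y \<Longrightarrow> ?fb y z \<Longrightarrow> ?fb x z" for x y z unfolding far_before_def by auto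
  have tot: "x \<noteq> y \<Longrightarrow> ?fb x y \<or> ?fb y x" for x y unfolding far_before_def by auto
  have lt: "rk x < rk y" if "?fb x y" "x \<in> S" for x y
  proof -
    have "{z\<in>S. ?fb z x} \<subset> {z\<in>S. ?fb z y}"
      using that trans irr by blast
    then show ?thesis unfolding rk_def using S by (intro psubset_card_mono) auto
  qed
  have inj: "inj_on rk S"
  proof (rule inj_onI)
    fix x y assume "x \<in> S" "y \<in> S" "rk x = rk y"
    then show "x = y" using lt tot by (metis less_irrefl)
  qed
  have rkS: "rk x < card S" if "x \<in> S" for x
  proof -
    have "{y\<in>S. ?fb y x} \<subset> S" using that irr by blast
    then show ?thesis unfolding rk_def using S by (intro psubset_card_mono) auto
  qed
  have img: "rk ` S = {..<card S}"
  proof (rule card_subset_eq)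
    show "rk ` S \<subseteq> {..<card S}" using rkS by auto
    show "card (rk ` S) = card {..<card S}" using card_image[OF inj] by simp
  qed simp
  show "real (card (far \<rho> r S T)) \<ge> r"
  proof (cases "real (card S) < r")
    case True then show ?thesis using r by simp
  next
    case False
    let ?m = "nat \<lceil>r\<rceil>"
    have m: "?m \<le> card S" using r by linarith
    have "far \<rho> r S T = {x\<in>S. rk x < ?m}" using False unfolding far_def rk_def by simp
    moreover have "rk ` {x\<in>S. rk x < ?m} = {..<?m}"
    proof (intro equalityI subsetI)
      fix i assume "i \<in> {..<?m}"
      then have "i < ?m" by simp
      from this m have "i < card S" by (rule less_le_trans)
      then have "i \<in> rk ` S" using img by auto
      then obtain y where "y \<in> S" "rk y = i" by auto
      then show "i \<in> rk ` {x\<in>S. rk x < ?m}" using \<open>i \<in> {..<?m}\<close> by auto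
    qed auto
    moreover have "inj_on rk {x\<in>S. rk x < ?m}" using inj by (rule inj_on_subset) auto
    ultimately have "card (far \<rho> r S T) = ?m" by (metis card_image card_lessThan)
    then show ?thesis by linarith
  qed
qed

lemma perm_mid_card:
  assumes W: "finite W" and ag: "a + g \<le> card W"
  shows "card {vs \<in> permutations_of_set W. \<Psi> (set (take g (drop a vs)))} \<le>
         card {vs \<in> permutations_of_set W. \<Psi> (set (take g vs))}"
proof -
  let ?f = "\<lambda>vs::'a list. drop a vs @ take a vs"
  let ?S = "{vs \<in> permutations_of_set W. \<Psi> (set (take g (drop a vs)))}"
  have len: "\<And>vs. vs \<in> permutations_of_set W \<Longrightarrow> length vs = card W"
    by (rule length_finite_permutations_of_set)
  have inj: "inj_on ?f ?S"
  proof (rule inj_onI)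
    fix u v assume u: "u \<in> ?S" and v: "v \<in> ?S" and e: "?f u = ?f v"
    have lu: "length u = card W" and lv: "length v = card W" using u v len by auto
    have "length (drop a u) = length (drop a v)" using lu lv by simp
    then have "drop a u = drop a v" "take a u = take a v" using e by auto
    then show "u = v" by (metis append_take_drop_id)
  qed
  have "?f ` ?S \<subseteq> {vs \<in> permutations_of_set W. \<Psi> (set (take g vs))}"
  proof
    fix w assume "w \<in> ?f ` ?S"
    then obtain v where v: "v \<in> ?S" "w = ?f v" by auto
    have lv: "length v = card W" using v len by auto
    have "set w = W" using v by (auto simp: permutations_of_set_def) (metis append_take_drop_id set_append Un_iff)+
    moreover have "distinct w"
    proof -
      have "distinct (take a v @ drop a v)" using v by (auto simp: permutations_of_set_def)
      then show ?thesis using v set_take_disj_set_drop_if_distinct[of v a a]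
        by (auto simp: distinct_append permutations_of_set_def)
    qed
    moreover have "take g w = take g (drop a v)" using v lv ag by simp
    ultimately show "w \<in> {vs \<in> permutations_of_set W. \<Psi> (set (take g vs))}" using v by auto
  qed
  then have "card (?f ` ?S) \<le> card {vs \<in> permutations_of_set W. \<Psi> (set (take g vs))}"
    by (intro card_mono) auto
  then show ?thesis using card_image[OF inj] by simp
qed

lemma bad_small:
  assumes D: "finite D"
  shows "2 * card {x0\<in>D. \<not> real (card D) \<le> 2 * real (card {x\<in>D. d x0 \<le> (d x::real)})} \<le> card D"
proof -
  let ?Bd = "{x0\<in>D. \<not> real (card D) \<le> 2 * real (card {x\<in>D. d x0 \<le> d x})}"
  show ?thesis
  proof (cases "?Bd = {}")
    case True then show ?thesis by (simp only: True card.empty)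
  next
    case False
    have fB: "finite ?Bd" using D by simp
    have "Min (d ` ?Bd) \<in> d ` ?Bd" using fB False by (intro Min_in) auto
    then obtain y where y: "y \<in> ?Bd" "d y = Min (d ` ?Bd)" by auto
    have "?Bd \<subseteq> {x\<in>D. d y \<le> d x}"
    proof
      fix x assume "x \<in> ?Bd"
      then have "d y \<le> d x" using y fB by auto
      then show "x \<in> {x\<in>D. d y \<le> d x}" using \<open>x \<in> ?Bd\<close> by auto
    qed
    then have "card ?Bd \<le> card {x\<in>D. d y \<le> d x}" using D by (intro card_mono) auto
    moreover have "real (card D) > 2 * real (card {x\<in>D. d y \<le> d x})" using y by auto
    ultimately show ?thesis by linarith
  qed
qed

lemma order_bound:
  assumes Q: "finite Q" and DQ: "D \<subseteq> Q"
  shows "real (card {ps \<in> permutations_of_set Q. D \<noteq> {} \<and>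
            \<not> (\<exists>x0\<in>set (take L (filter (\<lambda>x. x \<in> D) ps)). 2 * real (card {x\<in>D. d x0 \<le> (d x::real)}) \<ge> real (card D))})
         \<le> (1/2) ^ L * fact (card Q)"
proof (cases "D = {}")
  case True then show ?thesis by simp
next
  case False
  have fD: "finite D" using Q DQ finite_subset by auto
  let ?Bd = "{x0\<in>D. \<not> real (card D) \<le> 2 * real (card {x\<in>D. d x0 \<le> d x})}"
  have sub: "{ps \<in> permutations_of_set Q. D \<noteq> {} \<and>
            \<not> (\<exists>x0\<in>set (take L (filter (\<lambda>x. x \<in> D) ps)). 2 * real (card {x\<in>D. d x0 \<le> d x}) \<ge> real (card D))}
        \<subseteq> {ps \<in> permutations_of_set Q. set (take L (filter (\<lambda>x. x \<in> D) ps)) \<subseteq> ?Bd}"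
  proof
    fix ps assume "ps \<in> {ps \<in> permutations_of_set Q. D \<noteq> {} \<and>
            \<not> (\<exists>x0\<in>set (take L (filter (\<lambda>x. x \<in> D) ps)). 2 * real (card {x\<in>D. d x0 \<le> d x}) \<ge> real (card D))}"
    moreover have "set (take L (filter (\<lambda>x. x \<in> D) ps)) \<subseteq> D"
      using set_take_subset by fastforce
    ultimately show "ps \<in> {ps \<in> permutations_of_set Q. set (take L (filter (\<lambda>x. x \<in> D) ps)) \<subseteq> ?Bd}"
      by auto
  qed
  have "real (card {ps \<in> permutations_of_set Q. D \<noteq> {} \<and>
            \<not> (\<exists>x0\<in>set (take L (filter (\<lambda>x. x \<in> D) ps)). 2 * real (card {x\<in>D. d x0 \<le> d x}) \<ge> real (card D))})
     \<le> real (card {ps \<in> permutations_of_set Q. set (take L (filter (\<lambda>x. x \<in> D) ps)) \<subseteq> ?Bd})"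
    using card_mono[OF _ sub] by simp
  also have "\<dots> \<le> (real (card ?Bd) / real (card D)) ^ L * fact (card Q)"
    using filter_prefix_bound[OF Q DQ, of ?Bd L] False by auto
  also have "\<dots> \<le> (1/2) ^ L * fact (card Q)"
  proof -
    have "real (card D) > 0" using fD False by (simp add: card_gt_0_iff)
    moreover have "2 * card ?Bd \<le> card D" by (rule bad_small[OF fD])
    ultimately have "real (card ?Bd) / real (card D) \<le> 1/2" by (simp add: field_simps)
    then show ?thesis by (intro mult_right_mono power_mono) auto
  qed
  finally show ?thesis .
qed



lemma bad_far:
  fixes X :: "'a::linorder set" and TT :: "'a set \<Rightarrow> 'a set"
  assumes X: "finite X" and ats: "a + t + s \<le> card X" and r0: "0 < r"
    and L: "10 * Lg \<le> real s * r / real (card X - a)"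
  shows "real (card {xs \<in> permutations_of_set X. \<not> far_trivial r (X - set (take a xs)) \<and>
            \<not> well_rep (X - set (take a xs)) (set (take s (drop t (drop a xs))))
               (far \<rho> r (X - set (take a xs)) (TT (set (take a xs))))})
         \<le> 2 * exp (-Lg) * fact (card X)"
proof -
  let ?\<Phi> = "\<lambda>A vs. \<not> far_trivial r (X - A) \<and> \<not> well_rep (X - A) (set (take s (drop t vs))) (far \<rho> r (X - A) (TT A))"
  have "real (card {xs \<in> permutations_of_set X. ?\<Phi> (set (take a xs)) (drop a xs)}) \<le> 2 * exp (-Lg) * fact (card X)"
  proof (rule perm_cond_drop_bound[OF X])
    show "a \<le> card X" using ats by simp
    fix A assume A: "A \<subseteq> X" "card A = a"
    have fA: "finite A" using A X finite_subset by auto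
    have cXA: "card (X - A) = card X - a" using A fA by (simp add: card_Diff_subset)
    show "real (card {vs \<in> permutations_of_set (X - A). ?\<Phi> A vs}) \<le> 2 * exp (-Lg) * fact (card X - a)"
    proof (cases "far_trivial r (X - A)")
      case True then show ?thesis by simp
    next
      case False
      let ?F = "far \<rho> r (X - A) (TT A)"
      have rle: "r \<le> real (card (X - A))" using False unfolding far_trivial_def by simp
      have Fsub: "?F \<subseteq> X - A" and Fc: "real (card ?F) \<ge> r" using far_card[of "X - A" r] X rle by auto
      have Fne: "?F \<noteq> {}" using Fc r0 by auto
      have "card {vs \<in> permutations_of_set (X - A). ?\<Phi> A vs} \<le>
          card {vs \<in> permutations_of_set (X - A). \<not> well_rep (X - A) (set (take s (drop t vs))) ?F}"
        using False by simp
      also have "\<dots> \<le> card {vs \<in> permutations_of_set (X - A). \<not> well_rep (X - A) (set (take s vs)) ?F}"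
        by (rule perm_mid_card) (use X ats cXA in auto)
      finally have c1: "real (card {vs \<in> permutations_of_set (X - A). ?\<Phi> A vs}) \<le>
          real (card {vs \<in> permutations_of_set (X - A). \<not> well_rep (X - A) (set (take s vs)) ?F})" by simp
      have "10 * Lg \<le> real s * r / real (card X - a)" by (rule L)
      also have "\<dots> \<le> real s * real (card ?F) / real (card (X - A))"
        unfolding cXA using Fc by (intro divide_right_mono mult_left_mono) auto
      finally have Lg: "10 * Lg \<le> real s * real (card ?F) / real (card (X - A))" .
      have "real (card {vs \<in> permutations_of_set (X - A). \<not> well_rep (X - A) (set (take s vs)) ?F})
          \<le> 2 * exp (-Lg) * fact (card (X - A))"
        by (rule single_bound[OF _ Fsub Fne _ Lg]) (use X ats cXA in auto)
      then show ?thesis using c1 cXA by simp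
    qed
  qed
  then show ?thesis by simp
qed

lemma bad_bins:
  fixes X :: "'a::linorder set"
  assumes X: "finite X" and aa: "a + a \<le> card X" and z0: "0 < z"
    and L: "10 * Lg \<le> real a * z / real (card X - a)" and L64: "64 \<le> exp Lg"
    and WW: "\<And>S. S \<subseteq> X \<Longrightarrow> card S = a \<Longrightarrow> WW S \<subseteq> X - S"
    and lb: "\<And>S. S \<subseteq> X \<Longrightarrow> card S = a \<Longrightarrow> linear_bin_division \<rho> z (WW S) (TT S) (BB S)"
  shows "real (card {xs \<in> permutations_of_set X. \<not> bins_trivial z (WW (set (take a xs))) \<and>
            \<not> bins_well_rep (X - set (take a xs)) (set (take a (drop a xs))) (BB (set (take a xs)))})
         \<le> 16/7 * exp (-Lg) * fact (card X)"
proof -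
  let ?\<Phi> = "\<lambda>A vs. \<not> bins_trivial z (WW A) \<and> \<not> bins_well_rep (X - A) (set (take a vs)) (BB A)"
  have "real (card {xs \<in> permutations_of_set X. ?\<Phi> (set (take a xs)) (drop a xs)}) \<le> 16/7 * exp (-Lg) * fact (card X)"
  proof (rule perm_cond_drop_bound[OF X])
    show "a \<le> card X" using aa by simp
    fix A assume A: "A \<subseteq> X" "card A = a"
    have fA: "finite A" using A X finite_subset by auto
    have cXA: "card (X - A) = card X - a" using A fA by (simp add: card_Diff_subset)
    show "real (card {vs \<in> permutations_of_set (X - A). ?\<Phi> A vs}) \<le> 16/7 * exp (-Lg) * fact (card X - a)"
    proof (cases "bins_trivial z (WW A)")
      case True then show ?thesis by simp
    next
      case False
      have zW: "z \<le> real (card (WW A))" using False unfolding bins_trivial_def by simp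
      have "real (card {vs \<in> permutations_of_set (X - A). \<not> bins_well_rep (X - A) (set (take a vs)) (BB A)})
          \<le> 16/7 * exp (-Lg) * fact (card (X - A))"
        by (rule bins_bound[OF _ WW[OF A] lb[OF A] zW z0 _ _ L64]) (use X aa cXA L in auto)
      then show ?thesis using False cXA by simp
    qed
  qed
  then show ?thesis by simp
qed



definition badord :: "('a::linorder \<Rightarrow> 'a \<Rightarrow> real) \<Rightarrow> 'a set \<Rightarrow> 'a list \<Rightarrow> nat \<Rightarrow> nat \<Rightarrow> 'a set \<Rightarrow> 'a list \<Rightarrow> bool" where
  "badord \<rho> X cs Lq i Q ps \<longleftrightarrow> cluster \<rho> X cs i \<inter> Q \<noteq> {} \<and>
     \<not> (\<exists>x0\<in>set (take Lq (filter (\<lambda>x. x \<in> cluster \<rho> X cs i \<inter> Q) ps)).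
          2 * real (card {x\<in>cluster \<rho> X cs i \<inter> Q. \<rho> (cs!i) x0 \<le> \<rho> (cs!i) x}) \<ge> real (card (cluster \<rho> X cs i \<inter> Q)))"

lemma badord_app_right:
  assumes "set zs \<inter> Q = {}"
  shows "badord \<rho> X cs Lq i Q (ys @ zs) = badord \<rho> X cs Lq i Q ys"
proof -
  have "filter (\<lambda>x. x \<in> cluster \<rho> X cs i \<inter> Q) zs = []" using assms by (auto simp: filter_empty_conv)
  then show ?thesis unfolding badord_def by simp
qed

lemma badord_app_left:
  assumes "set ys \<inter> Q = {}"
  shows "badord \<rho> X cs Lq i Q (ys @ zs) = badord \<rho> X cs Lq i Q zs"
proof -
  have "filter (\<lambda>x. x \<in> cluster \<rho> X cs i \<inter> Q) ys = []" using assms by (auto simp: filter_empty_conv)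
  then show ?thesis unfolding badord_def by simp
qed

lemma badord_level3:
  assumes W: "finite W" and g: "g \<le> card W"
  shows "real (card {ts \<in> permutations_of_set W. \<exists>i<m. badord \<rho> X cs Lq i (set (take g ts)) ts})
         \<le> real m * (1/2) ^ Lq * fact (card W)"
proof -
  have one: "real (card {ts \<in> permutations_of_set W. badord \<rho> X cs Lq i (set (take g ts)) ts})
         \<le> (1/2) ^ Lq * fact (card W)" for i
  proof -
    have eq: "{ts \<in> permutations_of_set W. badord \<rho> X cs Lq i (set (take g ts)) ts} =
        {ts \<in> permutations_of_set W. badord \<rho> X cs Lq i (set (take g ts)) (take g ts)}"
    proof (intro Collect_cong conj_cong refl)
      fix ts assume "ts \<in> permutations_of_set W"
      then have "distinct ts" by (auto simp: permutations_of_set_def)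
      then have "set (drop g ts) \<inter> set (take g ts) = {}"
        using set_take_disj_set_drop_if_distinct[of ts g g] by auto
      then show "badord \<rho> X cs Lq i (set (take g ts)) ts = badord \<rho> X cs Lq i (set (take g ts)) (take g ts)"
        using badord_app_right[of "drop g ts" "set (take g ts)" \<rho> X cs Lq i "take g ts"] by simp
    qed
    have "real (card {ts \<in> permutations_of_set W. badord \<rho> X cs Lq i (set (take g ts)) (take g ts)})
        \<le> (1/2) ^ Lq * fact (card W)"
    proof (rule perm_cond_take_bound[OF W g])
      fix A assume A: "A \<subseteq> W" "card A = g"
      have fA: "finite A" using A W finite_subset by auto
      have "real (card {us \<in> permutations_of_set A. badord \<rho> X cs Lq i A us}) \<le> (1/2) ^ Lq * fact (card A)"
        using order_bound[OF fA, of "cluster \<rho> X cs i \<inter> A" Lq "\<rho> (cs!i)"] unfolding badord_def by auto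
      then show "real (card {us \<in> permutations_of_set A. badord \<rho> X cs Lq i A us}) \<le> (1/2) ^ Lq * fact g"
        using A by simp
    qed
    then show ?thesis using eq by simp
  qed
  have "{ts \<in> permutations_of_set W. \<exists>i<m. badord \<rho> X cs Lq i (set (take g ts)) ts} =
      (\<Union>i<m. {ts \<in> permutations_of_set W. badord \<rho> X cs Lq i (set (take g ts)) ts})" by auto
  then have "card {ts \<in> permutations_of_set W. \<exists>i<m. badord \<rho> X cs Lq i (set (take g ts)) ts} \<le>
      (\<Sum>i<m. card {ts \<in> permutations_of_set W. badord \<rho> X cs Lq i (set (take g ts)) ts})"
    using card_UN_le[of "{..<m}" "\<lambda>i. {ts \<in> permutations_of_set W. badord \<rho> X cs Lq i (set (take g ts)) ts}"] by simp
  then have "real (card {ts \<in> permutations_of_set W. \<exists>i<m. badord \<rho> X cs Lq i (set (take g ts)) ts}) \<le>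
      (\<Sum>i<m. real (card {ts \<in> permutations_of_set W. badord \<rho> X cs Lq i (set (take g ts)) ts}))"
    by (simp flip: of_nat_sum)
  also have "\<dots> \<le> (\<Sum>i<m. (1/2) ^ Lq * fact (card W))" by (intro sum_mono one)
  finally show ?thesis by simp
qed

lemma badord_level2:
  assumes W: "finite W" and ag: "a + g \<le> card W"
  shows "real (card {vs \<in> permutations_of_set W. \<exists>i<m. badord \<rho> X cs Lq i (set (take g (drop a vs))) vs})
         \<le> real m * (1/2) ^ Lq * fact (card W)"
proof -
  have eq: "{vs \<in> permutations_of_set W. \<exists>i<m. badord \<rho> X cs Lq i (set (take g (drop a vs))) vs} =
     {vs \<in> permutations_of_set W. (\<lambda>A ts. \<exists>i<m. badord \<rho> X cs Lq i (set (take g ts)) ts) (set (take a vs)) (drop a vs)}"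
  proof (intro Collect_cong conj_cong refl)
    fix vs assume "vs \<in> permutations_of_set W"
    then have "distinct vs" by (auto simp: permutations_of_set_def)
    then have d: "set (take a vs) \<inter> set (take g (drop a vs)) = {}"
      using set_take_disj_set_drop_if_distinct[of vs a a] set_take_subset[of g "drop a vs"] by auto
    show "(\<exists>i<m. badord \<rho> X cs Lq i (set (take g (drop a vs))) vs) =
        (\<lambda>A ts. \<exists>i<m. badord \<rho> X cs Lq i (set (take g ts)) ts) (set (take a vs)) (drop a vs)"
      using badord_app_left[OF d, of \<rho> X cs Lq _ "drop a vs"] by simp
  qed
  have "real (card {vs \<in> permutations_of_set W. (\<lambda>A ts. \<exists>i<m. badord \<rho> X cs Lq i (set (take g ts)) ts) (set (take a vs)) (drop a vs)})
       \<le> (real m * (1/2) ^ Lq) * fact (card W)"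
  proof (rule perm_cond_drop_bound[OF W])
    show "a \<le> card W" using ag by simp
    fix A assume A: "A \<subseteq> W" "card A = a"
    have fA: "finite A" using A W finite_subset by auto
    have cWA: "card (W - A) = card W - a" using A fA by (simp add: card_Diff_subset)
    have "real (card {ts \<in> permutations_of_set (W - A). \<exists>i<m. badord \<rho> X cs Lq i (set (take g ts)) ts})
        \<le> real m * (1/2) ^ Lq * fact (card (W - A))"
      by (rule badord_level3) (use W ag cWA in auto)
    then show "real (card {ts \<in> permutations_of_set (W - A). \<exists>i<m. badord \<rho> X cs Lq i (set (take g ts)) ts})
        \<le> (real m * (1/2) ^ Lq) * fact (card W - a)" using cWA by simp
  qed
  then show ?thesis using eq by simp
qed

lemma badord_level1:
  fixes TT :: "'a::linorder set \<Rightarrow> 'a list"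
  assumes X: "finite X" and aag: "a + a + g \<le> card X"
    and len: "\<And>S. S \<subseteq> X \<Longrightarrow> card S = a \<Longrightarrow> real (length (TT S)) \<le> K"
    and q: "K * (1/2) ^ Lq \<le> \<epsilon>"
  shows "real (card {xs \<in> permutations_of_set X. \<exists>i<length (TT (set (take a xs))).
            badord \<rho> X (TT (set (take a xs))) Lq i (set (take g (drop (2 * a) xs))) xs})
         \<le> \<epsilon> * fact (card X)"
proof -
  let ?\<Phi> = "\<lambda>A vs. \<exists>i<length (TT A). badord \<rho> X (TT A) Lq i (set (take g (drop a vs))) vs"
  have eq: "{xs \<in> permutations_of_set X. \<exists>i<length (TT (set (take a xs))).
            badord \<rho> X (TT (set (take a xs))) Lq i (set (take g (drop (2 * a) xs))) xs} =
       {xs \<in> permutations_of_set X. ?\<Phi> (set (take a xs)) (drop a xs)}"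
  proof (intro Collect_cong conj_cong refl)
    fix xs assume "xs \<in> permutations_of_set X"
    then have "distinct xs" by (auto simp: permutations_of_set_def)
    have dd: "drop (2 * a) xs = drop a (drop a xs)" by (simp add: mult_2)
    have d: "set (take a xs) \<inter> set (take g (drop a (drop a xs))) = {}"
      using set_take_disj_set_drop_if_distinct[OF \<open>distinct xs\<close>, of a "a + a"] set_take_subset[of g "drop a (drop a xs)"]
      by (auto simp: add.commute)
    show "(\<exists>i<length (TT (set (take a xs))).
            badord \<rho> X (TT (set (take a xs))) Lq i (set (take g (drop (2 * a) xs))) xs) =
          ?\<Phi> (set (take a xs)) (drop a xs)"
      unfolding dd using badord_app_left[OF d, of \<rho> X _ Lq _ "drop a xs"] by simp
  qed
  have "real (card {xs \<in> permutations_of_set X. ?\<Phi> (set (take a xs)) (drop a xs)}) \<le> \<epsilon> * fact (card X)"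
  proof (rule perm_cond_drop_bound[OF X])
    show "a \<le> card X" using aag by simp
    fix A assume A: "A \<subseteq> X" "card A = a"
    have fA: "finite A" using A X finite_subset by auto
    have cXA: "card (X - A) = card X - a" using A fA by (simp add: card_Diff_subset)
    have "real (card {vs \<in> permutations_of_set (X - A). ?\<Phi> A vs}) \<le> real (length (TT A)) * (1/2) ^ Lq * fact (card (X - A))"
      by (rule badord_level2) (use X aag cXA in auto)
    also have "\<dots> \<le> \<epsilon> * fact (card (X - A))"
      using len[OF A] q by (intro mult_right_mono) (auto intro: order_trans[OF mult_right_mono])
    finally show "real (card {vs \<in> permutations_of_set (X - A). ?\<Phi> A vs}) \<le> \<epsilon> * fact (card X - a)"
      using cXA by simp
  qed
  then show ?thesis using eq by simp
qed

lemma bad_clusters: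
  fixes X :: "'a set" and C :: "nat \<Rightarrow> 'a set"
  assumes X: "finite X" and s: "s \<le> card X" and CX: "\<And>i. C i \<subseteq> X" and ph: "0 < ph"
    and L: "10 * Lg \<le> real s * ph / real (card X)"
  shows "real (card {xs \<in> permutations_of_set X. \<exists>i<m. ph \<le> real (card (C i)) \<and> \<not> well_rep X (set (take s xs)) (C i)})
         \<le> real m * (2 * exp (-Lg)) * fact (card X)"
proof -
  let ?E = "\<lambda>i. {xs \<in> permutations_of_set X. ph \<le> real (card (C i)) \<and> \<not> well_rep X (set (take s xs)) (C i)}"
  have one: "real (card (?E i)) \<le> 2 * exp (-Lg) * fact (card X)" for i
  proof (cases "ph \<le> real (card (C i))")
    case False then show ?thesis by simp
  next
    case True
    have ne: "C i \<noteq> {}" using True ph by auto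
    have "10 * Lg \<le> real s * ph / real (card X)" by (rule L)
    also have "\<dots> \<le> real s * real (card (C i)) / real (card X)"
      using True by (intro divide_right_mono mult_left_mono) auto
    finally have Lg: "10 * Lg \<le> real s * real (card (C i)) / real (card X)" .
    show ?thesis using single_bound[OF X CX ne s Lg] True by simp
  qed
  have "{xs \<in> permutations_of_set X. \<exists>i<m. ph \<le> real (card (C i)) \<and> \<not> well_rep X (set (take s xs)) (C i)} =
      (\<Union>i<m. ?E i)" by auto
  then have "card {xs \<in> permutations_of_set X. \<exists>i<m. ph \<le> real (card (C i)) \<and> \<not> well_rep X (set (take s xs)) (C i)}
       \<le> (\<Sum>i<m. card (?E i))"
    using card_UN_le[of "{..<m}" ?E] by simp
  then have "real (card {xs \<in> permutations_of_set X. \<exists>i<m. ph \<le> real (card (C i)) \<and> \<not> well_rep X (set (take s xs)) (C i)})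
       \<le> (\<Sum>i<m. real (card (?E i)))" by (simp flip: of_nat_sum)
  also have "\<dots> \<le> (\<Sum>i<m. 2 * exp (-Lg) * fact (card X))" by (intro sum_mono one)
  finally show ?thesis by simp
qed



lemma half_pow_bound:
  fixes K \<delta> :: real
  assumes K: "K > 0" and d: "\<delta> > 0"
  shows "K * (1/2) ^ (nat \<lceil>log 2 (8 * K / \<delta>)\<rceil>) \<le> \<delta> / 8"
proof -
  let ?q = "nat \<lceil>log 2 (8 * K / \<delta>)\<rceil>"
  have pos: "8 * K / \<delta> > 0" using K d by simp
  have "log 2 (8 * K / \<delta>) \<le> real ?q" by linarith
  then have "2 powr (log 2 (8 * K / \<delta>)) \<le> 2 powr real ?q" by (intro powr_mono) auto
  then have "8 * K / \<delta> \<le> 2 ^ ?q" using pos by (simp add: powr_realpow)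
  then have "8 * K \<le> \<delta> * 2 ^ ?q" using d by (simp add: field_simps)
  then show ?thesis by (simp add: power_one_over field_simps)
qed

lemma ratio_ge:
  fixes a n :: nat and \<alpha> r :: real
  assumes "real a = \<alpha> * real n" "a < n" "r \<ge> 0"
  shows "\<alpha> * r \<le> real a * r / real (n - a)"
proof -
  have n0: "real n > 0" using assms by simp
  have "\<alpha> = real a / real n" using assms n0 by (simp add: field_simps)
  also have "\<dots> \<le> real a / real (n - a)"
  proof -
    have p: "0 < real (n - a)" using assms(2) by simp
    have le: "real (n - a) \<le> real n" by simp
    show ?thesis using p le n0 by (intro divide_left_mono) auto
  qed
  finally have "\<alpha> * r \<le> real a / real (n - a) * r" using assms(3) by (rule mult_right_mono)
  then show ?thesis by simp
qed

lemma prob_from_bad: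
  assumes X: "finite X" and sub: "\<And>xs. xs \<in> permutations_of_set X \<Longrightarrow> xs \<notin> E \<Longrightarrow> xs \<in> Bad"
    and c: "real (card (Bad \<inter> permutations_of_set X)) \<le> c * fact (card X)"
  shows "measure_pmf.prob (pmf_of_set (permutations_of_set X)) E \<ge> 1 - c"
proof -
  let ?P = "permutations_of_set X"
  have ne: "?P \<noteq> {}" using X by simp
  have fin: "finite ?P" by simp
  have m: "measure_pmf.prob (pmf_of_set ?P) E = real (card (?P \<inter> E)) / real (card ?P)"
    by (rule measure_pmf_of_set[OF ne fin])
  have cP: "real (card ?P) = fact (card X)" using X by simp
  have split: "card ?P = card (?P \<inter> E) + card (?P - E)"
  proof -
    have "?P = (?P \<inter> E) \<union> (?P - E)" by blast
    moreover have "card ((?P \<inter> E) \<union> (?P - E)) = card (?P \<inter> E) + card (?P - E)"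
      by (rule card_Un_disjoint) (use fin in auto)
    ultimately show ?thesis by simp
  qed
  have "?P - E \<subseteq> Bad \<inter> ?P" using sub by auto
  then have "card (?P - E) \<le> card (Bad \<inter> ?P)" by (intro card_mono) auto
  then have le: "real (card (?P - E)) \<le> c * fact (card X)" using c by linarith
  have fpos: "fact (card X) > (0::real)" by simp
  have "real (card (?P \<inter> E)) = fact (card X) - real (card (?P - E))" using split cP by simp
  then have "measure_pmf.prob (pmf_of_set ?P) E = 1 - real (card (?P - E)) / fact (card X)"
    using m cP fpos by (simp add: field_simps)
  moreover have "real (card (?P - E)) / fact (card X) \<le> c" using le fpos by (simp add: field_simps)
  ultimately show ?thesis by simp
qed

lemma ratio_ge2:
  fixes a b n :: nat and \<beta> r :: real
  assumes "real b = \<beta> * real n" "a < n" "r \<ge> 0"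
  shows "\<beta> * r \<le> real b * r / real (n - a)"
proof -
  have n0: "real n > 0" using assms(2) by simp
  have "\<beta> = real b / real n" using assms(1) n0 by (simp add: field_simps)
  also have "\<dots> \<le> real b / real (n - a)"
  proof -
    have p: "0 < real (n - a)" using assms(2) by simp
    have le: "real (n - a) \<le> real n" by simp
    show ?thesis using p le n0 by (intro divide_left_mono) auto
  qed
  finally have "\<beta> * r \<le> real b / real (n - a) * r" using assms(3) by (rule mult_right_mono)
  then show ?thesis by simp
qed



theorem lemma10:
  fixes X :: "'a::linorder set" and \<rho> :: "'a \<Rightarrow> 'a \<Rightarrow> real"
    and k :: nat and \<delta> \<alpha> \<gamma> :: real and a g :: nat
    and copt :: "'a list"
    and cs :: "'a set \<Rightarrow> 'a list"
    and Ba :: "'a set list"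
    and Bb Bc :: "'a set \<Rightarrow> 'a list \<Rightarrow> 'a set list"
  assumes finX: "finite X" and met: "metric_on X \<rho>"
    and k2: "k \<ge> 2" and \<delta>: "0 < \<delta>" "\<delta> < 1"
    and opt_sub: "set copt \<subseteq> X" and opt_ne: "copt \<noteq> []"
    and opt_dist: "distinct copt" and opt_len: "length copt \<le> k"
    and opt_min: "\<And>T. T \<subseteq> X \<Longrightarrow> T \<noteq> {} \<Longrightarrow> card T \<le> k \<Longrightarrow>
                    cost \<rho> X (set copt) \<le> cost \<rho> X T"
    and \<alpha>: "0 < \<alpha>" "\<alpha> \<le> 1/6" and \<gamma>: "\<alpha> \<le> \<gamma>" "\<gamma> \<le> 1 - 2 * \<alpha>"
    and a_def: "real a = \<alpha> * real (card X)" and g_def: "real g = \<gamma> * real (card X)"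
    and cs_ok: "\<And>S. S \<subseteq> X \<Longrightarrow> card S = a \<Longrightarrow>
        cs S \<noteq> [] \<and> distinct (cs S) \<and> set (cs S) \<subseteq> X \<and> real (length (cs S)) \<le> kplus k \<delta>"
    and Ba_ok: "linear_bin_division \<rho> (phi k \<delta> \<alpha> / 15) X (set copt) Ba"
    and Bb_ok: "\<And>S. S \<subseteq> X \<Longrightarrow> card S = a \<Longrightarrow>
        linear_bin_division \<rho> (phi k \<delta> \<alpha> / 3)
          ((X - S) - far \<rho> (real k * phi k \<delta> \<alpha>) (X - S) (set (cs S))) (set (cs S)) (Bb S (cs S))"
    and Bc_ok: "\<And>S. S \<subseteq> X \<Longrightarrow> card S = a \<Longrightarrow>
        linear_bin_division \<rho> (phi k \<delta> \<alpha> / 3)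
          ((X - S) - far \<rho> (4 * (real k + 1) * phi k \<delta> \<alpha>) (X - S) (set (cs S))) (set (cs S)) (Bc S (cs S))"
  shows "measure_pmf.prob (pmf_of_set (permutations_of_set X))
     {xs. let P1 = set (take a xs);
              P2 = set (take a (drop a xs));
              P3 = set (take g (drop (2 * a) xs));
              T = cs P1;
              ph = phi k \<delta> \<alpha>;
              Fb = far \<rho> (real k * ph) (X - P1) (set T);
              Fc = far \<rho> (4 * (real k + 1) * ph) (X - P1) (set T);
              Fd = far \<rho> (5 * (real k + 1) * ph) (X - P1) (set T);
              L = nat \<lceil>log 2 (8 * kplus k \<delta> / \<delta>)\<rceil>
          in (\<forall>i<length copt. real (card (cluster \<rho> X copt i)) \<ge> ph \<longrightarrow>
                 well_rep X P1 (cluster \<rho> X copt i) \<and> well_rep X (P1 \<union> P2) (cluster \<rho> X copt i))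
           \<and> (far_trivial (real k * ph) (X - P1) \<or> well_rep (X - P1) P2 Fb)
           \<and> (far_trivial (4 * (real k + 1) * ph) (X - P1) \<or> well_rep (X - P1) P2 Fc)
           \<and> (far_trivial (5 * (real k + 1) * ph) (X - P1) \<or> well_rep (X - P1) P3 Fd)
           \<and> (bins_trivial (ph / 15) X \<or> bins_well_rep X P1 Ba)
           \<and> (bins_trivial (ph / 3) ((X - P1) - Fb) \<or> bins_well_rep (X - P1) P2 (Bb P1 T))
           \<and> (bins_trivial (ph / 3) ((X - P1) - Fc) \<or> bins_well_rep (X - P1) P2 (Bc P1 T))
           \<and> (\<forall>i<length T. cluster \<rho> X T i \<inter> P3 \<noteq> {} \<longrightarrow>
                 (\<exists>x0\<in>set (take L (filter (\<lambda>x. x \<in> cluster \<rho> X T i \<inter> P3) xs)).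
                    2 * real (card {x\<in>cluster \<rho> X T i \<inter> P3. \<rho> (T!i) x0 \<le> \<rho> (T!i) x})
                      \<ge> real (card (cluster \<rho> X T i \<inter> P3))))}
     \<ge> 1 - \<delta> / 2"
proof (rule prob_from_bad[OF finX])
  let ?P = "permutations_of_set X"
  let ?ph = "phi k \<delta> \<alpha>"
  let ?P1 = "\<lambda>xs::'a list. set (take a xs)"
  let ?P2 = "\<lambda>xs::'a list. set (take a (drop a xs))"
  let ?P3 = "\<lambda>xs::'a list. set (take g (drop (2 * a) xs))"
  let ?Lq = "nat \<lceil>log 2 (8 * kplus k \<delta> / \<delta>)\<rceil>"
  let ?Fb = "\<lambda>S. far \<rho> (real k * ?ph) (X - S) (set (cs S))"
  let ?Fc = "\<lambda>S. far \<rho> (4 * (real k + 1) * ?ph) (X - S) (set (cs S))"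
  let ?Fd = "\<lambda>S. far \<rho> (5 * (real k + 1) * ?ph) (X - S) (set (cs S))"
  define B1 where "B1 = {xs \<in> ?P. \<exists>i<length copt. ?ph \<le> real (card (cluster \<rho> X copt i)) \<and>
      \<not> well_rep X (?P1 xs) (cluster \<rho> X copt i)}"
  define B1' where "B1' = {xs \<in> ?P. \<exists>i<length copt. ?ph \<le> real (card (cluster \<rho> X copt i)) \<and>
      \<not> well_rep X (set (take (2 * a) xs)) (cluster \<rho> X copt i)}"
  define B2b where "B2b = {xs \<in> ?P. \<not> far_trivial (real k * ?ph) (X - ?P1 xs) \<and>
      \<not> well_rep (X - ?P1 xs) (?P2 xs) (?Fb (?P1 xs))}"
  define B2c where "B2c = {xs \<in> ?P. \<not> far_trivial (4 * (real k + 1) * ?ph) (X - ?P1 xs) \<and>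
      \<not> well_rep (X - ?P1 xs) (?P2 xs) (?Fc (?P1 xs))}"
  define B2d where "B2d = {xs \<in> ?P. \<not> far_trivial (5 * (real k + 1) * ?ph) (X - ?P1 xs) \<and>
      \<not> well_rep (X - ?P1 xs) (?P3 xs) (?Fd (?P1 xs))}"
  define B3a where "B3a = {xs \<in> ?P. \<not> bins_trivial (?ph / 15) X \<and> \<not> bins_well_rep X (?P1 xs) Ba}"
  define B3b where "B3b = {xs \<in> ?P. \<not> bins_trivial (?ph / 3) ((X - ?P1 xs) - ?Fb (?P1 xs)) \<and>
      \<not> bins_well_rep (X - ?P1 xs) (?P2 xs) (Bb (?P1 xs) (cs (?P1 xs)))}"
  define B3c where "B3c = {xs \<in> ?P. \<not> bins_trivial (?ph / 3) ((X - ?P1 xs) - ?Fc (?P1 xs)) \<and>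
      \<not> bins_well_rep (X - ?P1 xs) (?P2 xs) (Bc (?P1 xs) (cs (?P1 xs)))}"
  define B4 where "B4 = {xs \<in> ?P. \<exists>i<length (cs (?P1 xs)). badord \<rho> X (cs (?P1 xs)) ?Lq i (?P3 xs) xs}"
  show "xs \<in> B1 \<union> B1' \<union> B2b \<union> B2c \<union> B2d \<union> B3a \<union> B3b \<union> B3c \<union> B4"
    if xs: "xs \<in> ?P" and nE: "xs \<notin> {xs. let P1 = set (take a xs);
              P2 = set (take a (drop a xs));
              P3 = set (take g (drop (2 * a) xs));
              T = cs P1;
              ph = phi k \<delta> \<alpha>;
              Fb = far \<rho> (real k * ph) (X - P1) (set T);
              Fc = far \<rho> (4 * (real k + 1) * ph) (X - P1) (set T);
              Fd = far \<rho> (5 * (real k + 1) * ph) (X - P1) (set T);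
              L = nat \<lceil>log 2 (8 * kplus k \<delta> / \<delta>)\<rceil>
          in (\<forall>i<length copt. real (card (cluster \<rho> X copt i)) \<ge> ph \<longrightarrow>
                 well_rep X P1 (cluster \<rho> X copt i) \<and> well_rep X (P1 \<union> P2) (cluster \<rho> X copt i))
           \<and> (far_trivial (real k * ph) (X - P1) \<or> well_rep (X - P1) P2 Fb)
           \<and> (far_trivial (4 * (real k + 1) * ph) (X - P1) \<or> well_rep (X - P1) P2 Fc)
           \<and> (far_trivial (5 * (real k + 1) * ph) (X - P1) \<or> well_rep (X - P1) P3 Fd)
           \<and> (bins_trivial (ph / 15) X \<or> bins_well_rep X P1 Ba)
           \<and> (bins_trivial (ph / 3) ((X - P1) - Fb) \<or> bins_well_rep (X - P1) P2 (Bb P1 T))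
           \<and> (bins_trivial (ph / 3) ((X - P1) - Fc) \<or> bins_well_rep (X - P1) P2 (Bc P1 T))
           \<and> (\<forall>i<length T. cluster \<rho> X T i \<inter> P3 \<noteq> {} \<longrightarrow>
                 (\<exists>x0\<in>set (take L (filter (\<lambda>x. x \<in> cluster \<rho> X T i \<inter> P3) xs)).
                    2 * real (card {x\<in>cluster \<rho> X T i \<inter> P3. \<rho> (T!i) x0 \<le> \<rho> (T!i) x})
                      \<ge> real (card (cluster \<rho> X T i \<inter> P3))))}" for xs
  proof -
    have t2: "set (take a xs) \<union> set (take a (drop a xs)) = set (take (2 * a) xs)"
      by (simp add: mult_2 take_add)
    show ?thesis
    proof (rule ccontr)
      assume nB: "xs \<notin> B1 \<union> B1' \<union> B2b \<union> B2c \<union> B2d \<union> B3a \<union> B3b \<union> B3c \<union> B4"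
      have a1: "\<forall>i<length copt. real (card (cluster \<rho> X copt i)) \<ge> ?ph \<longrightarrow>
                 well_rep X (?P1 xs) (cluster \<rho> X copt i) \<and> well_rep X (?P1 xs \<union> ?P2 xs) (cluster \<rho> X copt i)"
        using nB xs unfolding B1_def B1'_def t2 by auto
      have a2: "far_trivial (real k * ?ph) (X - ?P1 xs) \<or> well_rep (X - ?P1 xs) (?P2 xs) (?Fb (?P1 xs))"
        using nB xs unfolding B2b_def by auto
      have a3: "far_trivial (4 * (real k + 1) * ?ph) (X - ?P1 xs) \<or> well_rep (X - ?P1 xs) (?P2 xs) (?Fc (?P1 xs))"
        using nB xs unfolding B2c_def by auto
      have a4: "far_trivial (5 * (real k + 1) * ?ph) (X - ?P1 xs) \<or> well_rep (X - ?P1 xs) (?P3 xs) (?Fd (?P1 xs))"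
        using nB xs unfolding B2d_def by auto
      have a5: "bins_trivial (?ph / 15) X \<or> bins_well_rep X (?P1 xs) Ba"
        using nB xs unfolding B3a_def by auto
      have a6: "bins_trivial (?ph / 3) ((X - ?P1 xs) - ?Fb (?P1 xs)) \<or> bins_well_rep (X - ?P1 xs) (?P2 xs) (Bb (?P1 xs) (cs (?P1 xs)))"
        using nB xs unfolding B3b_def by auto
      have a7: "bins_trivial (?ph / 3) ((X - ?P1 xs) - ?Fc (?P1 xs)) \<or> bins_well_rep (X - ?P1 xs) (?P2 xs) (Bc (?P1 xs) (cs (?P1 xs)))"
        using nB xs unfolding B3c_def by auto
      have a8: "\<forall>i<length (cs (?P1 xs)). \<not> badord \<rho> X (cs (?P1 xs)) ?Lq i (?P3 xs) xs"
        using nB xs unfolding B4_def by auto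
      have a8': "\<forall>i<length (cs (?P1 xs)). cluster \<rho> X (cs (?P1 xs)) i \<inter> ?P3 xs \<noteq> {} \<longrightarrow>
                 (\<exists>x0\<in>set (take ?Lq (filter (\<lambda>x. x \<in> cluster \<rho> X (cs (?P1 xs)) i \<inter> ?P3 xs) xs)).
                    2 * real (card {x\<in>cluster \<rho> X (cs (?P1 xs)) i \<inter> ?P3 xs. \<rho> (cs (?P1 xs)!i) x0 \<le> \<rho> (cs (?P1 xs)!i) x})
                      \<ge> real (card (cluster \<rho> X (cs (?P1 xs)) i \<inter> ?P3 xs)))"
        using a8 unfolding badord_def by blast
      have "xs \<in> {xs. let P1 = set (take a xs);
              P2 = set (take a (drop a xs));
              P3 = set (take g (drop (2 * a) xs));
              T = cs P1;
              ph = phi k \<delta> \<alpha>;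
              Fb = far \<rho> (real k * ph) (X - P1) (set T);
              Fc = far \<rho> (4 * (real k + 1) * ph) (X - P1) (set T);
              Fd = far \<rho> (5 * (real k + 1) * ph) (X - P1) (set T);
              L = nat \<lceil>log 2 (8 * kplus k \<delta> / \<delta>)\<rceil>
          in (\<forall>i<length copt. real (card (cluster \<rho> X copt i)) \<ge> ph \<longrightarrow>
                 well_rep X P1 (cluster \<rho> X copt i) \<and> well_rep X (P1 \<union> P2) (cluster \<rho> X copt i))
           \<and> (far_trivial (real k * ph) (X - P1) \<or> well_rep (X - P1) P2 Fb)
           \<and> (far_trivial (4 * (real k + 1) * ph) (X - P1) \<or> well_rep (X - P1) P2 Fc)
           \<and> (far_trivial (5 * (real k + 1) * ph) (X - P1) \<or> well_rep (X - P1) P3 Fd)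
           \<and> (bins_trivial (ph / 15) X \<or> bins_well_rep X P1 Ba)
           \<and> (bins_trivial (ph / 3) ((X - P1) - Fb) \<or> bins_well_rep (X - P1) P2 (Bb P1 T))
           \<and> (bins_trivial (ph / 3) ((X - P1) - Fc) \<or> bins_well_rep (X - P1) P2 (Bc P1 T))
           \<and> (\<forall>i<length T. cluster \<rho> X T i \<inter> P3 \<noteq> {} \<longrightarrow>
                 (\<exists>x0\<in>set (take L (filter (\<lambda>x. x \<in> cluster \<rho> X T i \<inter> P3) xs)).
                    2 * real (card {x\<in>cluster \<rho> X T i \<inter> P3. \<rho> (T!i) x0 \<le> \<rho> (T!i) x})
                      \<ge> real (card (cluster \<rho> X T i \<inter> P3))))}"
        unfolding Let_def mem_Collect_eq using a1 a2 a3 a4 a5 a6 a7 a8' by (intro conjI)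
      with nE show False by contradiction
    qed
  qed
  show "real (card ((B1 \<union> B1' \<union> B2b \<union> B2c \<union> B2d \<union> B3a \<union> B3b \<union> B3c \<union> B4) \<inter> ?P)) \<le> \<delta> / 2 * fact (card X)"
  proof -
    have X_ne: "X \<noteq> {}" using opt_sub opt_ne by (cases copt) auto
    have npos: "0 < card X" using finX X_ne by (simp add: card_gt_0_iff)
    define Lg where "Lg = ln (32 * real k / \<delta>)"
    have kk: "real k \<ge> 2" using k2 by simp
    have x64: "64 \<le> 32 * real k / \<delta>"
    proof -
      have "64 \<le> 32 * real k" using kk by simp
      also have "\<dots> \<le> 32 * real k / \<delta>" using \<delta> kk by (simp add: field_simps)
      finally show ?thesis .
    qed
    have eLg: "exp Lg = 32 * real k / \<delta>" unfolding Lg_def using x64 by simp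
    have L64: "64 \<le> exp Lg" using eLg x64 by simp
    have Lg0: "0 < Lg" unfolding Lg_def using x64 by (intro ln_gt_zero) simp
    have eta: "exp (-Lg) = \<delta> / (32 * real k)" using eLg by (simp add: exp_minus inverse_eq_divide)
    have phE: "?ph = 150 * Lg / \<alpha>" by (simp add: phi_def Lg_def)
    have aph: "\<alpha> * ?ph = 150 * Lg" using \<alpha> by (simp add: phE)
    have ph0: "0 < ?ph" using phE Lg0 \<alpha> by simp
    have ha: "real a = \<alpha> * real (card X)" by (rule a_def)
    have aag: "a + a + g \<le> card X"
    proof -
      have "real (a + a + g) = (2 * \<alpha> + \<gamma>) * real (card X)" using a_def g_def by (simp add: algebra_simps)
      also have "\<dots> \<le> 1 * real (card X)" using \<gamma> by (intro mult_right_mono) auto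
      finally show ?thesis by simp
    qed
    have an: "a < card X"
    proof -
      have "real a < real (card X)" using a_def npos \<alpha> by simp
      then show ?thesis by simp
    qed
    have a0: "0 < a"
    proof -
      have "real a > 0" using a_def npos \<alpha> by simp
      then show ?thesis by simp
    qed
    have gn: "g < card X" using aag a0 by simp
    have fP: "finite ?P" by simp
    have cB1: "real (card B1) \<le> real (length copt) * (2 * exp (-Lg)) * fact (card X)"
    proof -
      have "10 * Lg \<le> real a * ?ph / real (card X)"
        using ha npos aph Lg0 by simp
      then show ?thesis unfolding B1_def
        by (intro bad_clusters[OF finX]) (use an ph0 in \<open>auto simp: cluster_def\<close>)
    qed
    have cB1': "real (card B1') \<le> real (length copt) * (2 * exp (-Lg)) * fact (card X)"
    proof -
      have "10 * Lg \<le> real (2 * a) * ?ph / real (card X)"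
        using ha npos aph Lg0 by simp
      then show ?thesis unfolding B1'_def
        by (intro bad_clusters[OF finX]) (use aag ph0 in \<open>auto simp: cluster_def\<close>)
    qed
    have farnum: "10 * Lg \<le> real b * r / real (card X - a)"
      if "real b = \<beta> * real (card X)" "\<alpha> \<le> \<beta>" "?ph \<le> r" for b \<beta> r
    proof -
      have r0: "r \<ge> 0" using that ph0 by simp
      have "10 * Lg \<le> \<alpha> * ?ph" using aph Lg0 by simp
      also have "\<dots> \<le> \<alpha> * r" using that \<alpha> by (intro mult_left_mono) auto
      also have "\<dots> \<le> \<beta> * r" using that r0 by (intro mult_right_mono) auto
      also have "\<dots> \<le> real b * r / real (card X - a)" by (rule ratio_ge2[OF that(1) an r0])
      finally show ?thesis .
    qed
    have kph: "?ph \<le> real k * ?ph" "?ph \<le> 4 * (real k + 1) * ?ph" "?ph \<le> 5 * (real k + 1) * ?ph"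
      using ph0 kk by auto
    have cB2b: "real (card B2b) \<le> 2 * exp (-Lg) * fact (card X)"
      using bad_far[OF finX _ _ farnum[OF ha order_refl kph(1)], of 0 \<rho> "\<lambda>S. set (cs S)"] aag ph0 kk
      unfolding B2b_def by simp
    have cB2c: "real (card B2c) \<le> 2 * exp (-Lg) * fact (card X)"
      using bad_far[OF finX _ _ farnum[OF ha order_refl kph(2)], of 0 \<rho> "\<lambda>S. set (cs S)"] aag ph0 kk
      unfolding B2c_def by simp
    have cB2d: "real (card B2d) \<le> 2 * exp (-Lg) * fact (card X)"
    proof -
      have dd: "drop (2 * a) xs = drop a (drop a xs)" for xs :: "'a list" by (simp add: mult_2)
      have "a + a + g \<le> card X" "0 < 5 * (real k + 1) * ?ph" using aag ph0 kk by auto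
      from bad_far[OF finX this farnum[OF g_def \<gamma>(1) kph(3)], of \<rho> "\<lambda>S. set (cs S)"]
      show ?thesis unfolding B2d_def dd .
    qed
    have cB3a: "real (card B3a) \<le> 16/7 * exp (-Lg) * fact (card X)"
    proof (cases "bins_trivial (?ph / 15) X")
      case True then show ?thesis unfolding B3a_def by simp
    next
      case False
      have zX: "?ph / 15 \<le> real (card X)" using False unfolding bins_trivial_def by simp
      have L: "10 * Lg \<le> real a * (?ph / 15) / real (card X)" using ha npos aph by simp
      have "real (card {vs \<in> ?P. \<not> bins_well_rep X (set (take a vs)) Ba}) \<le> 16/7 * exp (-Lg) * fact (card X)"
        by (rule bins_bound[OF finX subset_refl Ba_ok zX _ _ L L64]) (use ph0 an in auto)
      then show ?thesis unfolding B3a_def using False by simp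
    qed
    have binnum: "10 * Lg \<le> real a * (?ph / 3) / real (card X - a)"
    proof -
      have "10 * Lg \<le> \<alpha> * (?ph / 3)" using aph Lg0 by simp
      also have "\<dots> \<le> real a * (?ph / 3) / real (card X - a)" by (rule ratio_ge2[OF ha an]) (use ph0 in simp)
      finally show ?thesis .
    qed
    have cB3b: "real (card B3b) \<le> 16/7 * exp (-Lg) * fact (card X)"
      unfolding B3b_def
      by (rule bad_bins[OF finX _ _ binnum L64, where WW = "\<lambda>S. (X - S) - ?Fb S" and TT = "\<lambda>S. set (cs S)"
            and BB = "\<lambda>S. Bb S (cs S)" and \<rho> = \<rho>])
         (use aag ph0 Bb_ok in auto)
    have cB3c: "real (card B3c) \<le> 16/7 * exp (-Lg) * fact (card X)"
      unfolding B3c_def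
      by (rule bad_bins[OF finX _ _ binnum L64, where WW = "\<lambda>S. (X - S) - ?Fc S" and TT = "\<lambda>S. set (cs S)"
            and BB = "\<lambda>S. Bc S (cs S)" and \<rho> = \<rho>])
         (use aag ph0 Bc_ok in auto)
    have kp0: "kplus k \<delta> > 0" unfolding kplus_def using kk x64 by (simp add: Lg_def[symmetric]) (use Lg0 in simp)
    have cB4: "real (card B4) \<le> \<delta> / 8 * fact (card X)"
      unfolding B4_def
      by (rule badord_level1[OF finX aag, where K = "kplus k \<delta>"])
         (use cs_ok half_pow_bound[OF kp0 \<delta>(1)] in auto)
    have fin: "finite B1" "finite B1'" "finite B2b" "finite B2c" "finite B2d" "finite B3a" "finite B3b" "finite B3c" "finite B4"
      unfolding B1_def B1'_def B2b_def B2c_def B2d_def B3a_def B3b_def B3c_def B4_def by auto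
    have "card ((B1 \<union> B1' \<union> B2b \<union> B2c \<union> B2d \<union> B3a \<union> B3b \<union> B3c \<union> B4) \<inter> ?P) \<le>
          card (B1 \<union> B1' \<union> B2b \<union> B2c \<union> B2d \<union> B3a \<union> B3b \<union> B3c \<union> B4)"
      by (rule card_mono) (use fin in auto)
    also have "\<dots> \<le> card B1 + card B1' + card B2b + card B2c + card B2d + card B3a + card B3b + card B3c + card B4"
      using card_Un_le[of B1 B1'] card_Un_le[of "B1 \<union> B1'" B2b] card_Un_le[of "B1 \<union> B1' \<union> B2b" B2c]
        card_Un_le[of "B1 \<union> B1' \<union> B2b \<union> B2c" B2d] card_Un_le[of "B1 \<union> B1' \<union> B2b \<union> B2c \<union> B2d" B3a]
        card_Un_le[of "B1 \<union> B1' \<union> B2b \<union> B2c \<union> B2d \<union> B3a" B3b]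
        card_Un_le[of "B1 \<union> B1' \<union> B2b \<union> B2c \<union> B2d \<union> B3a \<union> B3b" B3c]
        card_Un_le[of "B1 \<union> B1' \<union> B2b \<union> B2c \<union> B2d \<union> B3a \<union> B3b \<union> B3c" B4]
      by linarith
    finally have tot: "real (card ((B1 \<union> B1' \<union> B2b \<union> B2c \<union> B2d \<union> B3a \<union> B3b \<union> B3c \<union> B4) \<inter> ?P)) \<le>
        real (card B1) + real (card B1') + real (card B2b) + real (card B2c) + real (card B2d) +
        real (card B3a) + real (card B3b) + real (card B3c) + real (card B4)"
      by (simp only: of_nat_add[symmetric] of_nat_le_iff)
    have n1: "real (length copt) * (2 * exp (-Lg)) \<le> \<delta> / 16"
    proof -
      have "real (length copt) * (2 * exp (-Lg)) \<le> real k * (2 * exp (-Lg))"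
        using opt_len by (intro mult_right_mono) auto
      also have "\<dots> = \<delta> / 16" using eta kk by (simp add: field_simps)
      finally show ?thesis .
    qed
    have n2: "2 * exp (-Lg) \<le> \<delta> / 32"
    proof -
      have "2 * exp (-Lg) = \<delta> / (16 * real k)" using eta by simp
      also have "\<dots> \<le> \<delta> / 32" using kk \<delta> by (intro divide_left_mono) auto
      finally show ?thesis .
    qed
    have n3: "16/7 * exp (-Lg) \<le> \<delta> / 28"
    proof -
      have "16/7 * exp (-Lg) = \<delta> / (14 * real k)" using eta by simp
      also have "\<dots> \<le> \<delta> / 28" using kk \<delta> by (intro divide_left_mono) auto
      finally show ?thesis .
    qed
    have fX: "fact (card X) > (0::real)" by simp
    have m1: "real (length copt) * (2 * exp (-Lg)) * fact (card X) \<le> \<delta>/16 * fact (card X)"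
      using n1 fX by (intro mult_right_mono) auto
    have m2: "2 * exp (-Lg) * fact (card X) \<le> \<delta>/32 * fact (card X)"
      using n2 fX by (intro mult_right_mono) auto
    have m3: "16/7 * exp (-Lg) * fact (card X) \<le> \<delta>/28 * fact (card X)"
      using n3 fX by (intro mult_right_mono) auto
    have "real (card B1) + real (card B1') + real (card B2b) + real (card B2c) + real (card B2d) +
        real (card B3a) + real (card B3b) + real (card B3c) + real (card B4)
        \<le> 2 * (\<delta>/16 * fact (card X)) + 3 * (\<delta>/32 * fact (card X)) + 3 * (\<delta>/28 * fact (card X)) + \<delta>/8 * fact (card X)"
      using cB1 cB1' cB2b cB2c cB2d cB3a cB3b cB3c cB4 m1 m2 m3 by linarith
    also have "\<dots> = (\<delta> * (1/8 + 3/32 + 3/28 + 1/8)) * fact (card X)" by (simp add: algebra_simps)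
    also have "\<dots> \<le> \<delta> / 2 * fact (card X)" using \<delta> fX by (intro mult_right_mono) auto
    finally show ?thesis using tot by linarith
  qed
qed


end
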